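(* Let $G$ be a graph with $m=|E(G)|$ edges, and let $(G',L,\alpha,\beta)$ be constructed from $G$ as described in the context. If $G$ is 3-colorable, then there exists an $L$-recoloring sequence for $G'$ from $\alpha$ to $\beta$ of length at most $c\cdot(m+1)$, where $c$ is an absolute constant.
   Context: A color list assignment $L$ gives each vertex a list $L(v)\subseteq[4]=\{1,2,3,4\}$. An $L$-coloring is a proper coloring $\gamma$ with $\gamma(v)\in L(v)$ for all $v$. $\mathcal{C}(G,L)$ is the graph on $L$-colorings, two adjacent iff they differ on exactly one vertex; an $L$-recoloring sequence of length $m$ is a sequence $\gamma_0,\ldots,\gamma_m$ of $L$-colorings with consecutive ones equal or adjacent in $\mathcal{C}(G,L)$. $(a,b)$-forbidding path: for $a,b\in[4]$, a path $P$ with lists $L(x)\subseteq[4]$ and end vertices $u,v$ is $(a,b)$-forbidding from $u$ to $v$ if (i) for all $x\in L(u)$, $y\in L(v)$, there is an $L$-coloring $\gamma$ of $P$ with $\gamma(u)=x,\gamma(v)=y$ iff $x\ne a$ or $y\ne b$ (such $(x,y)$ are called admissible); and (ii) for any $L$-coloring $\gamma$ of $P$ and any admissible $(x,y)$ with $x=\gamma(u)$ or $y=\gamma(v)$, there is an $L$-recoloring sequence of $P$ from $\gamma$ to an $L$-coloring $\delta$ with $\delta(u)=x,\delta(v)=y$ in which each internal vertex is recolored at most once and $u,v$ are not recolored until the last step. Such paths of length six exist whenever $L(u),L(v)\ne[4]$, $a\in L(u)$, $b\in L(v)$. Construction of $G'$: start with $V(G)$ (no edges among these), each $u\in V(G)$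 with $L(u)=\{1,2,3\}$, $\alpha(u)=1$. For every edge $uv\in E(G)$ (with a fixed orientation $u,v$), add new vertices $x_{uv},y_{uv},z_{uv}$ with $\alpha$-value $4$ each and $L(x_{uv})=\{1,2,4\}$, $L(y_{uv})=\{3,4\}$, $L(z_{uv})=\{1,2,4\}$; add edges $ux_{uv}$, $uy_{uv}$; and add (each with its own new internal vertices, each of length six) a $(1,2)$-forbidding and a $(3,1)$-forbidding path from $u$ to $x_{uv}$, a $(2,3)$-forbidding path from $u$ to $y_{uv}$, a $(2,1)$-forbidding and a $(3,2)$-forbidding path from $v$ to $x_{uv}$, a $(1,3)$-forbidding path from $v$ to $y_{uv}$, a $(4,1)$-forbidding path from $x_{uv}$ to $z_{uv}$, and a $(4,2)$-forbidding path from $y_{uv}$ to $z_{uv}$. Let $Z=\{z_{uv}\mid uv\in E(G)\}$. Add vertices $a,b,c,d$ with $\alpha(a)=1,\alpha(b)=2,\alpha(c)=3,\alpha(d)=4$, $L(a)=\{1,2,3\}$, $L(b)=\{1,2\}$, $L(c)=\{3,4\}$, $L(d)=\{4\}$, all edges among $a,b,c,d$ except $cd$, and edges from every vertex of $Z$ to $c$. Extend $\alpha$ arbitrarily to an $L$-coloring of all internal vertices of the forbidding paths (possible since the end colors are admissible). Set $\beta(w)=\alpha(w)$ for all $w\ne a,b$, $\beta(a)=2$, $\beta(b)=1$. *)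

theory Defs
  imports Main
begin

text \<open>Colors are natural numbers; lists are sets of colors. A coloring is a function
  from vertices to colors; only its values on the vertex set matter.\<close>

definition is_Lcol :: "'a set \<Rightarrow> ('a \<Rightarrow> 'a \<Rightarrow> bool) \<Rightarrow> ('a \<Rightarrow> nat set) \<Rightarrow> ('a \<Rightarrow> nat) \<Rightarrow> bool" where
  "is_Lcol Vs adj L \<gamma> \<longleftrightarrow>
     (\<forall>v\<in>Vs. \<gamma> v \<in> L v) \<and> (\<forall>u\<in>Vs. \<forall>v\<in>Vs. adj u v \<longrightarrow> \<gamma> u \<noteq> \<gamma> v)"

definition recol_seq :: "'a set \<Rightarrow> ('a \<Rightarrow> 'a \<Rightarrow> bool) \<Rightarrow> ('a \<Rightarrow> nat set) \<Rightarrow> (nat \<Rightarrow> 'a \<Rightarrow> nat) \<Rightarrow> nat \<Rightarrow> bool" where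
  "recol_seq Vs adj L \<sigma> m \<longleftrightarrow>
     (\<forall>i\<le>m. is_Lcol Vs adj L (\<sigma> i)) \<and>
     (\<forall>i<m. \<forall>v\<in>Vs. \<forall>w\<in>Vs. \<sigma> i v \<noteq> \<sigma> (Suc i) v \<and> \<sigma> i w \<noteq> \<sigma> (Suc i) w \<longrightarrow> v = w)"

definition path_adj :: "'a list \<Rightarrow> 'a \<Rightarrow> 'a \<Rightarrow> bool" where
  "path_adj ps x y \<longleftrightarrow> (\<exists>i. Suc i < length ps \<and>
      ((ps ! i = x \<and> ps ! Suc i = y) \<or> (ps ! i = y \<and> ps ! Suc i = x)))"

definition forbidding :: "nat \<Rightarrow> nat \<Rightarrow> 'a list \<Rightarrow> ('a \<Rightarrow> nat set) \<Rightarrow> bool" where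
  "forbidding a b ps L \<longleftrightarrow>
     (let u = hd ps; v = last ps; Vs = set ps; adj = path_adj ps in
      distinct ps \<and> 2 \<le> length ps \<and>
      (\<forall>x\<in>L u. \<forall>y\<in>L v.
          (\<exists>\<gamma>. is_Lcol Vs adj L \<gamma> \<and> \<gamma> u = x \<and> \<gamma> v = y) \<longleftrightarrow> (x \<noteq> a \<or> y \<noteq> b)) \<and>
      (\<forall>\<gamma> x y. is_Lcol Vs adj L \<gamma> \<and> x \<in> L u \<and> y \<in> L v \<and> (x \<noteq> a \<or> y \<noteq> b) \<and>
                (x = \<gamma> u \<or> y = \<gamma> v) \<longrightarrow>
         (\<exists>\<sigma> m. recol_seq Vs adj L \<sigma> m \<and> (\<forall>w\<in>Vs. \<sigma> 0 w = \<gamma> w) \<and>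
                 \<sigma> m u = x \<and> \<sigma> m v = y \<and>
                 (\<forall>w\<in>set (butlast (tl ps)). card {i. i < m \<and> \<sigma> (Suc i) w \<noteq> \<sigma> i w} \<le> 1) \<and>
                 (\<forall>i. Suc i < m \<longrightarrow> \<sigma> (Suc i) u = \<sigma> i u \<and> \<sigma> (Suc i) v = \<sigma> i v))))"

text \<open>A finite simple graph on vertex set V (naturals) with edge set E of 2-element subsets,
  together with a fixed orientation: ori e = (u,v) with e = {u,v}.\<close>

definition oriented_graph :: "nat set \<Rightarrow> nat set set \<Rightarrow> (nat set \<Rightarrow> nat \<times> nat) \<Rightarrow> bool" where
  "oriented_graph V E ori \<longleftrightarrow> finite V \<and>
     (\<forall>e\<in>E. e \<subseteq> V \<and> card e = 2 \<and> e = {fst (ori e), snd (ori e)})"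

definition three_colorable :: "nat set \<Rightarrow> nat set set \<Rightarrow> bool" where
  "three_colorable V E \<longleftrightarrow> (\<exists>f::nat \<Rightarrow> nat. (\<forall>v\<in>V. f v \<in> {1,2,3}) \<and>
     (\<forall>e\<in>E. \<forall>u\<in>e. \<forall>v\<in>e. u \<noteq> v \<longrightarrow> f u \<noteq> f v))"

datatype vtx = Orig nat | Xv "nat set" | Yv "nat set" | Zv "nat set"
  | Pv "nat set" nat nat  \<comment> \<open>internal vertex i (1..5) of the k-th forbidding path (k<8) of edge e\<close>
  | Av | Bv | Cv | Dv

text \<open>The eight forbidding paths per edge e oriented as (u,v): (start, end, a, b).\<close>

definition pspecs :: "nat set \<Rightarrow> nat \<times> nat \<Rightarrow> (vtx \<times> vtx \<times> nat \<times> nat) list" where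
  "pspecs e uv = (let u = fst uv; v = snd uv in
     [(Orig u, Xv e, 1, 2), (Orig u, Xv e, 3, 1), (Orig u, Yv e, 2, 3),
      (Orig v, Xv e, 2, 1), (Orig v, Xv e, 3, 2), (Orig v, Yv e, 1, 3),
      (Xv e, Zv e, 4, 1), (Yv e, Zv e, 4, 2)])"

definition gpath :: "nat set \<Rightarrow> nat \<times> nat \<Rightarrow> nat \<Rightarrow> vtx list" where
  "gpath e uv k = [fst (pspecs e uv ! k)] @ map (Pv e k) [1..<6] @ [fst (snd (pspecs e uv ! k))]"

definition path_a :: "nat set \<Rightarrow> nat \<times> nat \<Rightarrow> nat \<Rightarrow> nat" where
  "path_a e uv k = fst (snd (snd (pspecs e uv ! k)))"

definition path_b :: "nat set \<Rightarrow> nat \<times> nat \<Rightarrow> nat \<Rightarrow> nat" where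
  "path_b e uv k = snd (snd (snd (pspecs e uv ! k)))"

definition Gp_V :: "nat set \<Rightarrow> nat set set \<Rightarrow> vtx set" where
  "Gp_V V E = Orig ` V \<union> Xv ` E \<union> Yv ` E \<union> Zv ` E \<union>
     {Pv e k i | e k i. e \<in> E \<and> k < 8 \<and> 1 \<le> i \<and> i \<le> 5} \<union> {Av, Bv, Cv, Dv}"

definition Gp_edges :: "nat set set \<Rightarrow> (nat set \<Rightarrow> nat \<times> nat) \<Rightarrow> (vtx \<times> vtx) set" where
  "Gp_edges E ori =
     {(Orig (fst (ori e)), Xv e) | e. e \<in> E} \<union>
     {(Orig (fst (ori e)), Yv e) | e. e \<in> E} \<union>
     {(gpath e (ori e) k ! i, gpath e (ori e) k ! Suc i) | e k i. e \<in> E \<and> k < 8 \<and> i < 6} \<union>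
     {(Av, Bv), (Av, Cv), (Av, Dv), (Bv, Cv), (Bv, Dv)} \<union>
     {(Zv e, Cv) | e. e \<in> E}"

definition Gp_adj :: "nat set set \<Rightarrow> (nat set \<Rightarrow> nat \<times> nat) \<Rightarrow> vtx \<Rightarrow> vtx \<Rightarrow> bool" where
  "Gp_adj E ori x y \<longleftrightarrow> (x, y) \<in> Gp_edges E ori \<or> (y, x) \<in> Gp_edges E ori"

fun Gp_L :: "(nat set \<Rightarrow> nat \<Rightarrow> nat \<Rightarrow> nat set) \<Rightarrow> vtx \<Rightarrow> nat set" where
  "Gp_L Lint (Orig _) = {1,2,3}"
| "Gp_L Lint (Xv _) = {1,2,4}"
| "Gp_L Lint (Yv _) = {3,4}"
| "Gp_L Lint (Zv _) = {1,2,4}"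
| "Gp_L Lint (Pv e k i) = Lint e k i"
| "Gp_L Lint Av = {1,2,3}"
| "Gp_L Lint Bv = {1,2}"
| "Gp_L Lint Cv = {3,4}"
| "Gp_L Lint Dv = {4}"

fun Gp_alpha :: "(nat set \<Rightarrow> nat \<Rightarrow> nat \<Rightarrow> nat) \<Rightarrow> vtx \<Rightarrow> nat" where
  "Gp_alpha aint (Orig _) = 1"
| "Gp_alpha aint (Xv _) = 4"
| "Gp_alpha aint (Yv _) = 4"
| "Gp_alpha aint (Zv _) = 4"
| "Gp_alpha aint (Pv e k i) = aint e k i"
| "Gp_alpha aint Av = 1"
| "Gp_alpha aint Bv = 2"
| "Gp_alpha aint Cv = 3"
| "Gp_alpha aint Dv = 4"

definition Gp_beta :: "(nat set \<Rightarrow> nat \<Rightarrow> nat \<Rightarrow> nat) \<Rightarrow> vtx \<Rightarrow> nat" where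
  "Gp_beta aint = (Gp_alpha aint)(Av := 2, Bv := 1)"

definition valid_construction :: "nat set \<Rightarrow> nat set set \<Rightarrow> (nat set \<Rightarrow> nat \<times> nat)
    \<Rightarrow> (nat set \<Rightarrow> nat \<Rightarrow> nat \<Rightarrow> nat set) \<Rightarrow> (nat set \<Rightarrow> nat \<Rightarrow> nat \<Rightarrow> nat) \<Rightarrow> bool" where
  "valid_construction V E ori Lint aint \<longleftrightarrow>
     (\<forall>e\<in>E. \<forall>k<8. \<forall>i\<in>{1..5}. Lint e k i \<subseteq> {1,2,3,4}) \<and>
     (\<forall>e\<in>E. \<forall>k<8. forbidding (path_a e (ori e) k) (path_b e (ori e) k) (gpath e (ori e) k) (Gp_L Lint)) \<and>
     is_Lcol (Gp_V V E) (Gp_adj E ori) (Gp_L Lint) (Gp_alpha aint)"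

end

theory Submission
  imports Defs
begin



definition eqon :: "'a set \<Rightarrow> ('a \<Rightarrow> nat) \<Rightarrow> ('a \<Rightarrow> nat) \<Rightarrow> bool" where
  "eqon Vs g h \<longleftrightarrow> (\<forall>z\<in>Vs. g z = h z)"

definition onechg :: "'a set \<Rightarrow> ('a \<Rightarrow> nat) \<Rightarrow> ('a \<Rightarrow> nat) \<Rightarrow> bool" where
  "onechg Vs g h \<longleftrightarrow> (\<forall>v\<in>Vs. \<forall>w\<in>Vs. g v \<noteq> h v \<and> g w \<noteq> h w \<longrightarrow> v = w)"

definition reach where
  "reach Vs adj L k g h \<longleftrightarrow> (\<exists>\<sigma> n. recol_seq Vs adj L \<sigma> n \<and> n \<le> k \<and> eqon Vs (\<sigma> 0) g \<and> eqon Vs (\<sigma> n) h)"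

lemma recol_seq_alt: "recol_seq Vs adj L \<sigma> m \<longleftrightarrow>
   (\<forall>i\<le>m. is_Lcol Vs adj L (\<sigma> i)) \<and> (\<forall>i<m. onechg Vs (\<sigma> i) (\<sigma> (Suc i)))"
  unfolding recol_seq_def onechg_def by blast

lemma col_eqon: "is_Lcol Vs adj L g \<Longrightarrow> eqon Vs g h \<Longrightarrow> is_Lcol Vs adj L h"
  unfolding is_Lcol_def eqon_def by simp

lemma eqon_sym: "eqon Vs g h \<Longrightarrow> eqon Vs h g" unfolding eqon_def by auto
lemma eqon_trans: "eqon Vs g h \<Longrightarrow> eqon Vs h k \<Longrightarrow> eqon Vs g k" unfolding eqon_def by auto
lemma eqon_refl: "eqon Vs g g" unfolding eqon_def by auto

lemma onechg_eqon: "onechg Vs g h \<Longrightarrow> eqon Vs g g' \<Longrightarrow> eqon Vs h h' \<Longrightarrow> onechg Vs g' h'"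
  unfolding onechg_def eqon_def by simp

lemma reach0: "is_Lcol Vs adj L g \<Longrightarrow> eqon Vs g h \<Longrightarrow> reach Vs adj L 0 g h"
  unfolding reach_def
  apply (rule exI[of _ "\<lambda>_. g"], rule exI[of _ 0])
  by (auto simp: recol_seq_alt eqon_refl)

lemma reach1: "is_Lcol Vs adj L g \<Longrightarrow> is_Lcol Vs adj L h \<Longrightarrow> onechg Vs g h \<Longrightarrow> reach Vs adj L 1 g h"
  unfolding reach_def
  apply (rule exI[of _ "\<lambda>i. if i = 0 then g else h"], rule exI[of _ 1])
  by (auto simp: recol_seq_alt eqon_refl le_Suc_eq)

lemma reach_mono: "reach Vs adj L k g h \<Longrightarrow> k \<le> k' \<Longrightarrow> reach Vs adj L k' g h"
  unfolding reach_def by (meson le_trans)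

lemma reach_col: "reach Vs adj L k g h \<Longrightarrow> is_Lcol Vs adj L g \<and> is_Lcol Vs adj L h"
  unfolding reach_def recol_seq_alt using col_eqon by blast

lemma reach_eqon: "reach Vs adj L k g h \<Longrightarrow> eqon Vs h h' \<Longrightarrow> reach Vs adj L k g h'"
  unfolding reach_def using eqon_trans by blast

lemma reach_trans:
  assumes "reach Vs adj L k1 g h" "reach Vs adj L k2 h q"
  shows "reach Vs adj L (k1 + k2) g q"
proof -
  obtain s1 n1 where s1: "recol_seq Vs adj L s1 n1" "n1 \<le> k1" "eqon Vs (s1 0) g" "eqon Vs (s1 n1) h"
    using assms(1) unfolding reach_def by blast
  obtain s2 n2 where s2: "recol_seq Vs adj L s2 n2" "n2 \<le> k2" "eqon Vs (s2 0) h" "eqon Vs (s2 n2) q"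
    using assms(2) unfolding reach_def by blast
  define s where "s i = (if i \<le> n1 then s1 i else s2 (i - n1))" for i
  have e: "eqon Vs (s i) (s2 (i - n1))" if "n1 \<le> i" for i
  proof (cases "i = n1")
    case True then show ?thesis using s1(4) s2(3) by (simp add: s_def eqon_def)
  next
    case False then show ?thesis using that by (simp add: s_def eqon_refl)
  qed
  have "recol_seq Vs adj L s (n1 + n2)"
    unfolding recol_seq_alt
  proof (intro conjI allI impI)
    fix i assume i: "i \<le> n1 + n2"
    show "is_Lcol Vs adj L (s i)"
    proof (cases "i \<le> n1")
      case True then show ?thesis using s1(1) by (simp add: s_def recol_seq_alt)
    next
      case False
      then have "is_Lcol Vs adj L (s2 (i - n1))" using s2(1) i by (simp add: recol_seq_alt)
      moreover have "n1 \<le> i" using False by simp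
      ultimately show ?thesis using col_eqon[OF _ eqon_sym[OF e]] by blast
    qed
  next
    fix i assume i: "i < n1 + n2"
    show "onechg Vs (s i) (s (Suc i))"
    proof (cases "i < n1")
      case True then show ?thesis using s1(1) by (simp add: s_def recol_seq_alt)
    next
      case False
      then have "onechg Vs (s2 (i - n1)) (s2 (Suc (i - n1)))" using s2(1) i by (simp add: recol_seq_alt)
      moreover have "Suc (i - n1) = Suc i - n1" using False by simp
      moreover have "n1 \<le> i" "n1 \<le> Suc i" using False by simp_all
      ultimately show ?thesis using onechg_eqon[OF _ eqon_sym[OF e[of i]] eqon_sym[OF e[of "Suc i"]]] by simp
    qed
  qed
  moreover have "eqon Vs (s 0) g" using s1(3) by (simp add: s_def)
  moreover have "eqon Vs (s (n1 + n2)) q" using e[of "n1+n2"] s2(4) eqon_trans by simp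
  ultimately show ?thesis unfolding reach_def using s1(2) s2(2) by (intro exI[of _ s] exI[of _ "n1+n2"]) auto
qed

lemma reach_sym:
  assumes "reach Vs adj L k g h" shows "reach Vs adj L k h g"
proof -
  obtain s n where s: "recol_seq Vs adj L s n" "n \<le> k" "eqon Vs (s 0) g" "eqon Vs (s n) h"
    using assms unfolding reach_def by blast
  have "recol_seq Vs adj L (\<lambda>i. s (n - i)) n"
    unfolding recol_seq_alt
  proof (intro conjI allI impI)
    fix i assume "i \<le> n" then show "is_Lcol Vs adj L (s (n - i))" using s(1) by (simp add: recol_seq_alt)
  next
    fix i assume i: "i < n"
    then have "onechg Vs (s (n - Suc i)) (s (Suc (n - Suc i)))" using s(1) by (simp add: recol_seq_alt)
    moreover have "Suc (n - Suc i) = n - i" using i by simp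
    ultimately show "onechg Vs (s (n - i)) (s (n - Suc i))" unfolding onechg_def by fastforce
  qed
  then show ?thesis unfolding reach_def using s by (intro exI[of _ "\<lambda>i. s (n - i)"] exI[of _ n]) auto
qed

lemma reach_map:
  assumes "reach Vs adj L k g h"
    and "\<And>q. is_Lcol Vs adj L q \<Longrightarrow> is_Lcol Vs adj L (F q)"
    and "\<And>q r. onechg Vs q r \<Longrightarrow> onechg Vs (F q) (F r)"
    and "\<And>q r. eqon Vs q r \<Longrightarrow> eqon Vs (F q) (F r)"
  shows "reach Vs adj L k (F g) (F h)"
proof -
  obtain s n where s: "recol_seq Vs adj L s n" "n \<le> k" "eqon Vs (s 0) g" "eqon Vs (s n) h"
    using assms unfolding reach_def by blast
  have "recol_seq Vs adj L (\<lambda>i. F (s i)) n" using s(1) assms(2,3) by (simp add: recol_seq_alt)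
  then show ?thesis unfolding reach_def using s assms(4) by (intro exI[of _ "\<lambda>i. F (s i)"] exI[of _ n]) auto
qed




lemma list7: "length xs = 7 \<Longrightarrow> \<exists>a b c d e f g. xs = [a,b,c,d,e,f,g]"
  by (simp add: length_Suc_conv numeral_eq_Suc) blast

lemma ex6: "(\<exists>i<Suc (Suc (Suc (Suc (Suc (Suc 0))))). Q i) \<longleftrightarrow> Q 0 \<or> Q (Suc 0) \<or> Q (Suc (Suc 0)) \<or> Q (Suc (Suc (Suc 0))) \<or> Q (Suc (Suc (Suc (Suc 0)))) \<or> Q (Suc (Suc (Suc (Suc (Suc 0)))))"
  by (simp add: less_Suc_eq conj_disj_distribR ex_disj_distrib)

lemma path_adj7: "path_adj [a,b,c,d,e,f,g] u v \<longleftrightarrow>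
  (a = u \<and> b = v \<or> a = v \<and> b = u \<or> b = u \<and> c = v \<or> b = v \<and> c = u \<or>
   c = u \<and> d = v \<or> c = v \<and> d = u \<or> d = u \<and> e = v \<or> d = v \<and> e = u \<or>
   e = u \<and> f = v \<or> e = v \<and> f = u \<or> f = u \<and> g = v \<or> f = v \<and> g = u)"
  unfolding path_adj_def by (simp add: numeral_eq_Suc ex6)

lemma path_adj_sym: "path_adj ps u v \<Longrightarrow> path_adj ps v u"
  unfolding path_adj_def by blast

lemma path_adj_set: "path_adj ps u v \<Longrightarrow> u \<in> set ps \<and> v \<in> set ps"
  unfolding path_adj_def by (auto intro: nth_mem)

locale psys =
  fixes Vs :: "'a set" and adj :: "'a \<Rightarrow> 'a \<Rightarrow> bool" and L :: "'a \<Rightarrow> nat set"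
    and I :: "'b set" and P :: "'b \<Rightarrow> 'a list" and fa fb :: "'b \<Rightarrow> nat"
  assumes finI: "finite I"
    and forb: "j \<in> I \<Longrightarrow> forbidding (fa j) (fb j) (P j) L"
    and len: "j \<in> I \<Longrightarrow> length (P j) = 7"
    and sub: "j \<in> I \<Longrightarrow> set (P j) \<subseteq> Vs"
    and padj: "j \<in> I \<Longrightarrow> path_adj (P j) x y \<Longrightarrow> adj x y"
    and iadj: "j \<in> I \<Longrightarrow> x \<in> set (butlast (tl (P j))) \<Longrightarrow> y \<in> Vs \<Longrightarrow> adj x y \<or> adj y x \<Longrightarrow> path_adj (P j) x y"
    and uniq: "j \<in> I \<Longrightarrow> j' \<in> I \<Longrightarrow> x \<in> set (butlast (tl (P j))) \<Longrightarrow> x \<in> set (P j') \<Longrightarrow> j = j'"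
begin

lemma Pform: "j \<in> I \<Longrightarrow> \<exists>a b c d e f g. P j = [a,b,c,d,e,f,g] \<and> distinct [a,b,c,d,e,f,g]"
proof -
  assume j: "j \<in> I"
  have "distinct (P j)" using forb[OF j] unfolding forbidding_def Let_def by (elim conjE)
  moreover obtain a b c d e f g where "P j = [a,b,c,d,e,f,g]" using list7[OF len[OF j]] by blast
  ultimately show ?thesis by auto
qed

lemma prep:
  assumes j: "j \<in> I" and cg: "is_Lcol Vs adj L \<gamma>" and x: "x \<in> L (P j ! 0)" and y: "y \<in> L (P j ! 6)"
    and adm: "x \<noteq> fa j \<or> y \<noteq> fb j" and one: "x = \<gamma> (P j ! 0) \<or> y = \<gamma> (P j ! 6)"
  shows "\<exists>\<delta>. reach Vs adj L 5 \<gamma> \<delta> \<and> (\<forall>z. z \<notin> set (butlast (tl (P j))) \<longrightarrow> \<delta> z = \<gamma> z)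
     \<and> \<delta> (P j ! 1) \<noteq> x \<and> \<delta> (P j ! 5) \<noteq> y"
proof -
  obtain p0 p1 p2 p3 p4 p5 p6 where Pj: "P j = [p0,p1,p2,p3,p4,p5,p6]"
    and dist: "distinct [p0,p1,p2,p3,p4,p5,p6]" using Pform[OF j] by blast
  define ps where "ps = P j"
  have psf: "ps = [p0,p1,p2,p3,p4,p5,p6]" using Pj ps_def by simp
  have F: "forbidding (fa j) (fb j) ps L" using forb j ps_def by simp
  have intj: "set (butlast (tl (P j))) = {p1,p2,p3,p4,p5}" using Pj by simp
  have gp: "is_Lcol (set ps) (path_adj ps) L \<gamma>"
    using cg sub[OF j] padj[OF j] unfolding is_Lcol_def ps_def by blast
  have F4: "\<forall>g x y. is_Lcol (set ps) (path_adj ps) L g \<and> x \<in> L (hd ps) \<and> y \<in> L (last ps) \<and> (x \<noteq> fa j \<or> y \<noteq> fb j) \<and>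
                (x = g (hd ps) \<or> y = g (last ps)) \<longrightarrow>
         (\<exists>\<sigma> m. recol_seq (set ps) (path_adj ps) L \<sigma> m \<and> (\<forall>w\<in>set ps. \<sigma> 0 w = g w) \<and>
                 \<sigma> m (hd ps) = x \<and> \<sigma> m (last ps) = y \<and>
                 (\<forall>w\<in>set (butlast (tl ps)). card {i. i < m \<and> \<sigma> (Suc i) w \<noteq> \<sigma> i w} \<le> 1) \<and>
                 (\<forall>i. Suc i < m \<longrightarrow> \<sigma> (Suc i) (hd ps) = \<sigma> i (hd ps) \<and> \<sigma> (Suc i) (last ps) = \<sigma> i (last ps)))"
    using F unfolding forbidding_def Let_def by (elim conjE) assumption
  have "\<exists>\<sigma> m. recol_seq (set ps) (path_adj ps) L \<sigma> m \<and> (\<forall>w\<in>set ps. \<sigma> 0 w = \<gamma> w) \<and>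
                 \<sigma> m (hd ps) = x \<and> \<sigma> m (last ps) = y \<and>
                 (\<forall>w\<in>set (butlast (tl ps)). card {i. i < m \<and> \<sigma> (Suc i) w \<noteq> \<sigma> i w} \<le> 1) \<and>
                 (\<forall>i. Suc i < m \<longrightarrow> \<sigma> (Suc i) (hd ps) = \<sigma> i (hd ps) \<and> \<sigma> (Suc i) (last ps) = \<sigma> i (last ps))"
    apply (rule mp[OF spec[OF spec[OF spec[OF F4, of \<gamma>], of x], of y]])
    using gp x y adm one psf Pj by simp
  then obtain \<sigma> m where rs: "recol_seq (set ps) (path_adj ps) L \<sigma> m"
    and s0: "\<forall>w\<in>set ps. \<sigma> 0 w = \<gamma> w" and sm0: "\<sigma> m p0 = x" and sm6: "\<sigma> m p6 = y"
    and cnt: "\<forall>w\<in>{p1,p2,p3,p4,p5}. card {i. i < m \<and> \<sigma> (Suc i) w \<noteq> \<sigma> i w} \<le> 1"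
    and fx: "\<forall>i. Suc i < m \<longrightarrow> \<sigma> (Suc i) p0 = \<sigma> i p0 \<and> \<sigma> (Suc i) p6 = \<sigma> i p6"
    using psf by auto
  define m' where "m' = m - 1"
  define \<tau> where "\<tau> i = (\<lambda>z. if z \<in> {p1,p2,p3,p4,p5} then \<sigma> i z else \<gamma> z)" for i
  have pcol: "\<And>i. i \<le> m \<Longrightarrow> is_Lcol (set ps) (path_adj ps) L (\<sigma> i)"
    using rs by (simp add: recol_seq_alt)
  have ends: "\<sigma> i p0 = \<gamma> p0 \<and> \<sigma> i p6 = \<gamma> p6" if "i \<le> m'" for i
    using that
  proof (induction i)
    case 0 then show ?case using s0 psf by simp
  next
    case (Suc i)
    have "Suc i < m" using Suc.prems m'_def by arith
    then show ?case using fx Suc by auto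
  qed
  have teq: "\<forall>z\<in>set ps. \<tau> i z = \<sigma> i z" if "i \<le> m'" for i
    using ends[OF that] psf \<tau>_def by auto
  have tcol: "is_Lcol Vs adj L (\<tau> i)" if i: "i \<le> m'" for i
    unfolding is_Lcol_def
  proof (intro conjI ballI impI)
    have im: "i \<le> m" using i m'_def by simp
    fix v assume "v \<in> Vs"
    show "\<tau> i v \<in> L v"
    proof (cases "v \<in> {p1,p2,p3,p4,p5}")
      case True
      then have "v \<in> set ps" using psf by auto
      then have "\<sigma> i v \<in> L v" using pcol[OF im] unfolding is_Lcol_def by blast
      then show ?thesis using True by (simp add: \<tau>_def)
    next
      case False then show ?thesis using cg \<open>v \<in> Vs\<close> unfolding is_Lcol_def \<tau>_def by simp
    qed
  next
    have im: "i \<le> m" using i m'_def by simp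
    fix u v assume uv: "u \<in> Vs" "v \<in> Vs" "adj u v"
    show "\<tau> i u \<noteq> \<tau> i v"
    proof (cases "u \<in> {p1,p2,p3,p4,p5} \<or> v \<in> {p1,p2,p3,p4,p5}")
      case True
      have pa: "path_adj ps u v"
      proof (cases "u \<in> {p1,p2,p3,p4,p5}")
        case True
        then have "u \<in> set (butlast (tl (P j)))" using intj by simp
        then show ?thesis using iadj[OF j, of u v] uv ps_def by simp
      next
        case False
        then have "v \<in> set (butlast (tl (P j)))" using intj \<open>u \<in> {p1,p2,p3,p4,p5} \<or> v \<in> {p1,p2,p3,p4,p5}\<close> by simp
        then have "path_adj (P j) v u" using iadj[OF j, of v u] uv by simp
        then show ?thesis using path_adj_sym ps_def by simp
      qed
      have uvs: "u \<in> set ps" "v \<in> set ps" using path_adj_set[OF pa] by simp_all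
      then have "\<tau> i u = \<sigma> i u" "\<tau> i v = \<sigma> i v" using teq[OF i] by simp_all
      moreover have "\<sigma> i u \<noteq> \<sigma> i v" using pcol[OF im] uvs pa unfolding is_Lcol_def by blast
      ultimately show ?thesis by simp
    next
      case False then show ?thesis using cg uv unfolding is_Lcol_def \<tau>_def by simp
    qed
  qed
  have tone: "onechg Vs (\<tau> i) (\<tau> (Suc i))" if i: "i < m'" for i
  proof -
    have "onechg (set ps) (\<sigma> i) (\<sigma> (Suc i))" using rs i m'_def by (simp add: recol_seq_alt)
    then show ?thesis unfolding onechg_def \<tau>_def using psf by (auto split: if_splits)
  qed
  have reachk: "reach Vs adj L (card {i. i < k \<and> \<not> eqon Vs (\<tau> i) (\<tau> (Suc i))}) \<gamma> (\<tau> k)" if "k \<le> m'" for k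
    using that
  proof (induction k)
    case 0
    have "eqon Vs \<gamma> (\<tau> 0)" using s0 psf unfolding eqon_def \<tau>_def by auto
    then show ?case using reach0[OF cg] by simp
  next
    case (Suc k)
    have IH: "reach Vs adj L (card {i. i < k \<and> \<not> eqon Vs (\<tau> i) (\<tau> (Suc i))}) \<gamma> (\<tau> k)" using Suc by simp
    show ?case
    proof (cases "eqon Vs (\<tau> k) (\<tau> (Suc k))")
      case True
      have "{i. i < Suc k \<and> \<not> eqon Vs (\<tau> i) (\<tau> (Suc i))} = {i. i < k \<and> \<not> eqon Vs (\<tau> i) (\<tau> (Suc i))}"
        using True less_Suc_eq by auto
      then show ?thesis using reach_eqon[OF IH True] by simp
    next
      case False
      have "{i. i < Suc k \<and> \<not> eqon Vs (\<tau> i) (\<tau> (Suc i))} = insert k {i. i < k \<and> \<not> eqon Vs (\<tau> i) (\<tau> (Suc i))}"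
        using False less_Suc_eq by auto
      then have c: "card {i. i < Suc k \<and> \<not> eqon Vs (\<tau> i) (\<tau> (Suc i))} = card {i. i < k \<and> \<not> eqon Vs (\<tau> i) (\<tau> (Suc i))} + 1"
        by simp
      have "reach Vs adj L 1 (\<tau> k) (\<tau> (Suc k))"
        using reach1[OF tcol tcol tone] Suc.prems by simp
      then have "reach Vs adj L (card {i. i < k \<and> \<not> eqon Vs (\<tau> i) (\<tau> (Suc i))} + 1) \<gamma> (\<tau> (Suc k))"
        using reach_trans[OF IH] by blast
      then show ?thesis using c by simp
    qed
  qed
  have cardb: "card {i. i < m' \<and> \<not> eqon Vs (\<tau> i) (\<tau> (Suc i))} \<le> 5"
  proof -
    have "{i. i < m' \<and> \<not> eqon Vs (\<tau> i) (\<tau> (Suc i))} \<subseteq> (\<Union>z\<in>{p1,p2,p3,p4,p5}. {i. i < m \<and> \<sigma> (Suc i) z \<noteq> \<sigma> i z})"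
    proof
      fix i assume "i \<in> {i. i < m' \<and> \<not> eqon Vs (\<tau> i) (\<tau> (Suc i))}"
      then have i: "i < m'" and ne: "\<not> eqon Vs (\<tau> i) (\<tau> (Suc i))" by auto
      from ne obtain z where z: "\<tau> i z \<noteq> \<tau> (Suc i) z" unfolding eqon_def by blast
      have zi: "z \<in> {p1,p2,p3,p4,p5}"
      proof (rule ccontr)
        assume "z \<notin> {p1,p2,p3,p4,p5}"
        then have "\<tau> i z = \<tau> (Suc i) z" unfolding \<tau>_def by presburger
        then show False using z by contradiction
      qed
      then have "\<sigma> (Suc i) z \<noteq> \<sigma> i z" using z unfolding \<tau>_def by presburger
      moreover have "i < m" using i m'_def by simp
      ultimately show "i \<in> (\<Union>z\<in>{p1,p2,p3,p4,p5}. {i. i < m \<and> \<sigma> (Suc i) z \<noteq> \<sigma> i z})"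
        using zi by blast
    qed
    then have "card {i. i < m' \<and> \<not> eqon Vs (\<tau> i) (\<tau> (Suc i))} \<le> card (\<Union>z\<in>{p1,p2,p3,p4,p5}. {i. i < m \<and> \<sigma> (Suc i) z \<noteq> \<sigma> i z})"
      by (intro card_mono) auto
    also have "\<dots> \<le> (\<Sum>z\<in>{p1,p2,p3,p4,p5}. card {i. i < m \<and> \<sigma> (Suc i) z \<noteq> \<sigma> i z})"
      by (rule card_UN_le) simp
    also have "\<dots> \<le> (\<Sum>z\<in>{p1,p2,p3,p4,p5}. 1)"
      by (rule sum_mono) (use cnt in blast)
    also have "\<dots> \<le> 5" using dist by simp
    finally show ?thesis .
  qed
  define \<delta> where "\<delta> = \<tau> m'"
  have r5: "reach Vs adj L 5 \<gamma> \<delta>" using reachk[of m'] cardb reach_mono \<delta>_def by blast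
  have last1: "onechg (set ps) (\<sigma> m') (\<sigma> m)"
  proof (cases "m = 0")
    case True then show ?thesis using m'_def unfolding onechg_def by simp
  next
    case False then have "m' < m" "Suc m' = m" using m'_def by auto
    then show ?thesis using rs by (metis recol_seq_alt)
  qed
  have pm: "is_Lcol (set ps) (path_adj ps) L (\<sigma> m)" "is_Lcol (set ps) (path_adj ps) L (\<sigma> m')"
    using pcol m'_def by auto
  have a01: "path_adj ps p0 p1" "path_adj ps p5 p6" using psf by (simp_all add: path_adj7)
  have d1: "\<delta> p1 \<noteq> x"
  proof -
    have "\<sigma> m p0 \<noteq> \<sigma> m p1" using pm(1) a01 psf unfolding is_Lcol_def by simp
    moreover have "\<sigma> m' p0 \<noteq> \<sigma> m' p1" using pm(2) a01 psf unfolding is_Lcol_def by simp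
    moreover have "p0 \<noteq> p1" using dist by simp
    ultimately have "\<sigma> m' p1 \<noteq> x" using last1 sm0 psf unfolding onechg_def by (metis list.set_intros(1) list.set_intros(2))
    then show ?thesis using \<delta>_def \<tau>_def by simp
  qed
  have d5: "\<delta> p5 \<noteq> y"
  proof -
    have "\<sigma> m p5 \<noteq> \<sigma> m p6" using pm(1) a01 psf unfolding is_Lcol_def by simp
    moreover have "\<sigma> m' p5 \<noteq> \<sigma> m' p6" using pm(2) a01 psf unfolding is_Lcol_def by simp
    moreover have "p5 \<noteq> p6" using dist by simp
    moreover have "p5 \<in> set ps" "p6 \<in> set ps" using psf by simp_all
    ultimately have "\<sigma> m' p5 \<noteq> y" using last1 sm6 unfolding onechg_def by metis
    then show ?thesis using \<delta>_def \<tau>_def by simp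
  qed
  show ?thesis using r5 d1 d5 intj Pj by (intro exI[of _ \<delta>]) (auto simp: \<delta>_def \<tau>_def)
qed

end



context psys begin

definition NI where "NI z \<longleftrightarrow> (\<forall>j\<in>I. z \<notin> set (butlast (tl (P j))))"

lemma Pfacts: assumes j: "j \<in> I"
  shows "P j ! 1 \<in> set (butlast (tl (P j)))" "P j ! 5 \<in> set (butlast (tl (P j)))"
    "P j ! 1 \<in> set (P j)" "P j ! 5 \<in> set (P j)" "P j ! 0 \<in> set (P j)" "P j ! 6 \<in> set (P j)"
    "P j ! 0 \<notin> set (butlast (tl (P j)))" "P j ! 6 \<notin> set (butlast (tl (P j)))"
  using Pform[OF j] by auto

lemma ends_NI: assumes j: "j \<in> I" shows "NI (P j ! 0)" "NI (P j ! 6)"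
  unfolding NI_def using uniq[OF _ j] Pfacts[OF j] by metis+

lemma nbr: assumes j: "j \<in> I" and y: "y \<in> set (butlast (tl (P j)))" and w: "NI w"
    and pa: "path_adj (P j) y w"
  shows "(w = P j ! 0 \<and> y = P j ! 1) \<or> (w = P j ! 6 \<and> y = P j ! 5)"
proof -
  obtain p0 p1 p2 p3 p4 p5 p6 where Pj: "P j = [p0,p1,p2,p3,p4,p5,p6]"
    and dist: "distinct [p0,p1,p2,p3,p4,p5,p6]" using Pform[OF j] by blast
  have "w \<notin> {p1,p2,p3,p4,p5}" using w j Pj unfolding NI_def by fastforce
  moreover have "y \<in> {p1,p2,p3,p4,p5}" using y Pj by simp
  moreover have "w \<in> set (P j)" using path_adj_set[OF pa] by simp
  ultimately have "w = p0 \<or> w = p6" using Pj by auto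
  then show ?thesis using pa dist \<open>y \<in> {p1,p2,p3,p4,p5}\<close> unfolding Pj path_adj7 by auto
qed

definition prepd where "prepd W t j \<delta> \<longleftrightarrow>
  (P j ! 0 \<in> W \<longrightarrow> \<delta> (P j ! 1) \<noteq> t (P j ! 0)) \<and> (P j ! 6 \<in> W \<longrightarrow> \<delta> (P j ! 5) \<noteq> t (P j ! 6))"

lemma prepK:
  assumes cg: "is_Lcol Vs adj L \<gamma>" and WNI: "\<forall>w\<in>W. NI w" and tL: "\<forall>w\<in>W. t w \<in> L w"
    and ph: "\<forall>j\<in>I. P j ! 0 \<in> W \<longrightarrow> P j ! 6 \<notin> W \<and> (t (P j ! 0) \<noteq> fa j \<or> \<gamma> (P j ! 6) \<noteq> fb j)"
    and pl: "\<forall>j\<in>I. P j ! 6 \<in> W \<longrightarrow> P j ! 0 \<notin> W \<and> (\<gamma> (P j ! 0) \<noteq> fa j \<or> t (P j ! 6) \<noteq> fb j)"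
    and K: "K \<subseteq> I"
  shows "\<exists>\<delta>. reach Vs adj L (5 * card K) \<gamma> \<delta> \<and> (\<forall>z. NI z \<longrightarrow> \<delta> z = \<gamma> z) \<and> (\<forall>j\<in>K. prepd W t j \<delta>)"
proof -
  have fK: "finite K" using K finI finite_subset by blast
  from fK K show ?thesis
  proof (induction K rule: finite_induct)
    case empty
    then show ?case using reach0[OF cg eqon_refl] by auto
  next
    case (insert j K)
    then obtain \<delta> where r: "reach Vs adj L (5 * card K) \<gamma> \<delta>" and nd: "\<forall>z. NI z \<longrightarrow> \<delta> z = \<gamma> z"
      and pr: "\<forall>j\<in>K. prepd W t j \<delta>" by auto
    have j: "j \<in> I" using insert by simp
    have cd: "is_Lcol Vs adj L \<delta>" using reach_col[OF r] by simp
    have c: "card (insert j K) = card K + 1" using insert by simp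
    have e0: "\<delta> (P j ! 0) = \<gamma> (P j ! 0)" "\<delta> (P j ! 6) = \<gamma> (P j ! 6)" using nd ends_NI[OF j] by auto
    have inV: "P j ! 0 \<in> Vs" "P j ! 6 \<in> Vs" using sub[OF j] Pfacts[OF j] by auto
    have Ld: "\<delta> (P j ! 0) \<in> L (P j ! 0)" "\<delta> (P j ! 6) \<in> L (P j ! 6)" using cd inV unfolding is_Lcol_def by auto
    have keep: "prepd W t j' \<delta>'" if "j' \<in> K" "\<forall>z. z \<notin> set (butlast (tl (P j))) \<longrightarrow> \<delta>' z = \<delta> z" for j' \<delta>'
    proof -
      have j': "j' \<in> I" using that insert by auto
      have "j' \<noteq> j" using that insert by auto
      then have "P j' ! 1 \<notin> set (butlast (tl (P j)))" "P j' ! 5 \<notin> set (butlast (tl (P j)))"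
        using uniq[OF j j'] Pfacts[OF j'] by blast+
      then show ?thesis using that pr unfolding prepd_def by simp
    qed
    show ?case
    proof (cases "P j ! 0 \<in> W")
      case True
      have "\<exists>\<delta>'. reach Vs adj L 5 \<delta> \<delta>' \<and> (\<forall>z. z \<notin> set (butlast (tl (P j))) \<longrightarrow> \<delta>' z = \<delta> z)
           \<and> \<delta>' (P j ! 1) \<noteq> t (P j ! 0) \<and> \<delta>' (P j ! 5) \<noteq> \<delta> (P j ! 6)"
        apply (rule prep[OF j cd])
        using True tL Ld ph j e0 by auto
      then obtain \<delta>' where r': "reach Vs adj L 5 \<delta> \<delta>'" and o': "\<forall>z. z \<notin> set (butlast (tl (P j))) \<longrightarrow> \<delta>' z = \<delta> z"
        and p': "\<delta>' (P j ! 1) \<noteq> t (P j ! 0)" by blast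
      have "reach Vs adj L (5 * card (insert j K)) \<gamma> \<delta>'" using reach_trans[OF r r'] c by (simp add: algebra_simps)
      moreover have "\<forall>z. NI z \<longrightarrow> \<delta>' z = \<gamma> z" using o' nd j unfolding NI_def by auto
      moreover have "prepd W t j \<delta>'" using p' True ph j unfolding prepd_def by auto
      ultimately show ?thesis using keep[OF _ o'] by auto
    next
      case F0: False
      show ?thesis
      proof (cases "P j ! 6 \<in> W")
        case True
        have "\<exists>\<delta>'. reach Vs adj L 5 \<delta> \<delta>' \<and> (\<forall>z. z \<notin> set (butlast (tl (P j))) \<longrightarrow> \<delta>' z = \<delta> z)
             \<and> \<delta>' (P j ! 1) \<noteq> \<delta> (P j ! 0) \<and> \<delta>' (P j ! 5) \<noteq> t (P j ! 6)"
          apply (rule prep[OF j cd])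
          using True tL Ld pl j e0 by auto
        then obtain \<delta>' where r': "reach Vs adj L 5 \<delta> \<delta>'" and o': "\<forall>z. z \<notin> set (butlast (tl (P j))) \<longrightarrow> \<delta>' z = \<delta> z"
          and p': "\<delta>' (P j ! 5) \<noteq> t (P j ! 6)" by blast
        have "reach Vs adj L (5 * card (insert j K)) \<gamma> \<delta>'" using reach_trans[OF r r'] c by (simp add: algebra_simps)
        moreover have "\<forall>z. NI z \<longrightarrow> \<delta>' z = \<gamma> z" using o' nd j unfolding NI_def by auto
        moreover have "prepd W t j \<delta>'" using p' F0 unfolding prepd_def by auto
        ultimately show ?thesis using keep[OF _ o'] by auto
      next
        case False
        have "reach Vs adj L (5 * card (insert j K)) \<gamma> \<delta>" using reach_mono[OF r] c by simp
        moreover have "prepd W t j \<delta>" using False F0 unfolding prepd_def by auto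
        ultimately show ?thesis using nd pr by auto
      qed
    qed
  qed
qed

lemma recK:
  assumes c0: "is_Lcol Vs adj L \<delta>0" and WNI: "\<forall>w\<in>W. NI w" and tL: "\<forall>w\<in>W. t w \<in> L w"
    and WV: "W \<subseteq> Vs" and finW: "finite W"
    and dir: "\<forall>w\<in>W. \<forall>y\<in>Vs. (adj w y \<or> adj y w) \<longrightarrow> NI y \<longrightarrow> y \<notin> W \<and> t w \<noteq> \<delta>0 y"
    and pr: "\<forall>j\<in>I. prepd W t j \<delta>0"
    and W': "W' \<subseteq> W"
  shows "reach Vs adj L (card W') \<delta>0 (\<lambda>z. if z \<in> W' then t z else \<delta>0 z)"
proof -
  have fW': "finite W'" using W' finW finite_subset by blast
  from fW' W' show ?thesis
  proof (induction W' rule: finite_induct)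
    case empty
    then show ?case using reach0[OF c0] by (simp add: eqon_def)
  next
    case (insert w W')
    define g where "g = (\<lambda>z. if z \<in> W' then t z else \<delta>0 z)"
    define h where "h = (\<lambda>z. if z \<in> insert w W' then t z else \<delta>0 z)"
    have r: "reach Vs adj L (card W') \<delta>0 g" using insert g_def by simp
    have cg: "is_Lcol Vs adj L g" using reach_col[OF r] by simp
    have wW: "w \<in> W" using insert by simp
    have hg: "h = g(w := t w)" unfolding h_def g_def by auto
    have key: "g y \<noteq> t w \<and> y \<noteq> w" if y: "y \<in> Vs" "adj w y \<or> adj y w" for y
    proof -
      have wV: "w \<in> Vs" using wW WV by auto
      have "y \<noteq> w" using cg y wV unfolding is_Lcol_def by auto
      moreover have "g y \<noteq> t w"
      proof (cases "NI y")
        case True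
        then have "y \<notin> W" "t w \<noteq> \<delta>0 y" using dir wW y by blast+
        then show ?thesis using insert unfolding g_def by auto
      next
        case False
        then obtain j where j: "j \<in> I" and yj: "y \<in> set (butlast (tl (P j)))" unfolding NI_def by blast
        have "path_adj (P j) y w" using iadj[OF j yj wV] y by blast
        then have "(w = P j ! 0 \<and> y = P j ! 1) \<or> (w = P j ! 6 \<and> y = P j ! 5)"
          using nbr[OF j yj] WNI wW by blast
        moreover have "y \<notin> W" using False WNI by blast
        ultimately show ?thesis using pr j wW insert unfolding g_def prepd_def by auto
      qed
      ultimately show ?thesis by simp
    qed
    have ch: "is_Lcol Vs adj L h"
      unfolding is_Lcol_def
    proof (intro conjI ballI impI)
      fix v assume "v \<in> Vs" then show "h v \<in> L v" using cg tL wW unfolding hg is_Lcol_def by auto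
    next
      fix u v assume uv: "u \<in> Vs" "v \<in> Vs" "adj u v"
      show "h u \<noteq> h v"
      proof (cases "u = w")
        case True then show ?thesis using key[of v] uv unfolding hg by auto
      next
        case False
        show ?thesis
        proof (cases "v = w")
          case True then show ?thesis using key[of u] uv by (auto simp: hg)
        next
          case False then show ?thesis using \<open>u \<noteq> w\<close> cg uv unfolding hg is_Lcol_def by auto
        qed
      qed
    qed
    have "onechg Vs g h" unfolding onechg_def hg by auto
    then have "reach Vs adj L 1 g h" using reach1[OF cg ch] by simp
    then have "reach Vs adj L (card W' + 1) \<delta>0 h" using reach_trans[OF r] by blast
    then show ?case using insert h_def by simp
  qed
qed

lemma phase:
  assumes cg: "is_Lcol Vs adj L \<gamma>" and finW: "finite W" and WV: "W \<subseteq> Vs"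
    and WNI: "\<forall>w\<in>W. NI w" and tL: "\<forall>w\<in>W. t w \<in> L w"
    and dir: "\<forall>w\<in>W. \<forall>y\<in>Vs. (adj w y \<or> adj y w) \<longrightarrow> NI y \<longrightarrow> y \<notin> W \<and> t w \<noteq> \<gamma> y"
    and ph: "\<forall>j\<in>I. P j ! 0 \<in> W \<longrightarrow> P j ! 6 \<notin> W \<and> (t (P j ! 0) \<noteq> fa j \<or> \<gamma> (P j ! 6) \<noteq> fb j)"
    and pl: "\<forall>j\<in>I. P j ! 6 \<in> W \<longrightarrow> P j ! 0 \<notin> W \<and> (\<gamma> (P j ! 0) \<noteq> fa j \<or> t (P j ! 6) \<noteq> fb j)"
  shows "\<exists>\<delta>. reach Vs adj L (5 * card I + card W) \<gamma> \<delta> \<and> (\<forall>z. NI z \<longrightarrow> \<delta> z = (if z \<in> W then t z else \<gamma> z))"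
proof -
  obtain \<delta>0 where r0: "reach Vs adj L (5 * card I) \<gamma> \<delta>0" and n0: "\<forall>z. NI z \<longrightarrow> \<delta>0 z = \<gamma> z"
    and p0: "\<forall>j\<in>I. prepd W t j \<delta>0"
    using prepK[OF cg WNI tL ph pl subset_refl] by (elim exE conjE)
  have c0: "is_Lcol Vs adj L \<delta>0" using reach_col[OF r0] by simp
  have dir': "\<forall>w\<in>W. \<forall>y\<in>Vs. (adj w y \<or> adj y w) \<longrightarrow> NI y \<longrightarrow> y \<notin> W \<and> t w \<noteq> \<delta>0 y"
  proof (intro ballI impI)
    fix w y assume a: "w \<in> W" "y \<in> Vs" "adj w y \<or> adj y w" "NI y"
    then have "\<delta>0 y = \<gamma> y" using n0 by blast
    moreover have "y \<notin> W \<and> t w \<noteq> \<gamma> y" using dir a by blast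
    ultimately show "y \<notin> W \<and> t w \<noteq> \<delta>0 y" by simp
  qed
  have "reach Vs adj L (card W) \<delta>0 (\<lambda>z. if z \<in> W then t z else \<delta>0 z)"
    using recK[OF c0 WNI tL WV finW dir' p0 subset_refl] .
  from reach_trans[OF r0 this] have "reach Vs adj L (5 * card I + card W) \<gamma> (\<lambda>z. if z \<in> W then t z else \<delta>0 z)" .
  moreover have "\<forall>z. NI z \<longrightarrow> (\<lambda>z. if z \<in> W then t z else \<delta>0 z) z = (if z \<in> W then t z else \<gamma> z)"
    using n0 by simp
  ultimately show ?thesis by blast
qed

lemma phase':
  assumes cg: "is_Lcol Vs adj L \<gamma>" and sk: "\<forall>z. NI z \<longrightarrow> \<gamma> z = s z"
    and finW: "finite W" and WV: "W \<subseteq> Vs"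
    and WNI: "\<forall>w\<in>W. NI w" and tL: "\<forall>w\<in>W. t w \<in> L w"
    and dir: "\<forall>w\<in>W. \<forall>y\<in>Vs. (adj w y \<or> adj y w) \<longrightarrow> NI y \<longrightarrow> y \<notin> W \<and> t w \<noteq> s y"
    and ph: "\<forall>j\<in>I. P j ! 0 \<in> W \<longrightarrow> P j ! 6 \<notin> W \<and> (t (P j ! 0) \<noteq> fa j \<or> s (P j ! 6) \<noteq> fb j)"
    and pl: "\<forall>j\<in>I. P j ! 6 \<in> W \<longrightarrow> P j ! 0 \<notin> W \<and> (s (P j ! 0) \<noteq> fa j \<or> t (P j ! 6) \<noteq> fb j)"
  shows "\<exists>\<delta>. reach Vs adj L (5 * card I + card W) \<gamma> \<delta> \<and> (\<forall>z. NI z \<longrightarrow> \<delta> z = (if z \<in> W then t z else s z))"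
proof -
  have dir': "\<forall>w\<in>W. \<forall>y\<in>Vs. (adj w y \<or> adj y w) \<longrightarrow> NI y \<longrightarrow> y \<notin> W \<and> t w \<noteq> \<gamma> y"
  proof (intro ballI impI)
    fix w y assume a: "w \<in> W" "y \<in> Vs" "adj w y \<or> adj y w" "NI y"
    then have "\<gamma> y = s y" using sk by blast
    moreover have "y \<notin> W \<and> t w \<noteq> s y" using dir a by blast
    ultimately show "y \<notin> W \<and> t w \<noteq> \<gamma> y" by simp
  qed
  have ph': "\<forall>j\<in>I. P j ! 0 \<in> W \<longrightarrow> P j ! 6 \<notin> W \<and> (t (P j ! 0) \<noteq> fa j \<or> \<gamma> (P j ! 6) \<noteq> fb j)"
  proof (intro ballI impI)
    fix j assume j: "j \<in> I" and "P j ! 0 \<in> W"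
    then have "P j ! 6 \<notin> W \<and> (t (P j ! 0) \<noteq> fa j \<or> s (P j ! 6) \<noteq> fb j)" using ph by blast
    moreover have "\<gamma> (P j ! 6) = s (P j ! 6)" using sk ends_NI[OF j] by blast
    ultimately show "P j ! 6 \<notin> W \<and> (t (P j ! 0) \<noteq> fa j \<or> \<gamma> (P j ! 6) \<noteq> fb j)" by simp
  qed
  have pl': "\<forall>j\<in>I. P j ! 6 \<in> W \<longrightarrow> P j ! 0 \<notin> W \<and> (\<gamma> (P j ! 0) \<noteq> fa j \<or> t (P j ! 6) \<noteq> fb j)"
  proof (intro ballI impI)
    fix j assume j: "j \<in> I" and "P j ! 6 \<in> W"
    then have "P j ! 0 \<notin> W \<and> (s (P j ! 0) \<noteq> fa j \<or> t (P j ! 6) \<noteq> fb j)" using pl by blast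
    moreover have "\<gamma> (P j ! 0) = s (P j ! 0)" using sk ends_NI[OF j] by blast
    ultimately show "P j ! 0 \<notin> W \<and> (\<gamma> (P j ! 0) \<noteq> fa j \<or> t (P j ! 6) \<noteq> fb j)" by simp
  qed
  obtain \<delta> where r: "reach Vs adj L (5 * card I + card W) \<gamma> \<delta>"
    and n: "\<forall>z. NI z \<longrightarrow> \<delta> z = (if z \<in> W then t z else \<gamma> z)"
    using phase[OF cg finW WV WNI tL dir' ph' pl'] by blast
  have "\<forall>z. NI z \<longrightarrow> \<delta> z = (if z \<in> W then t z else s z)"
  proof (intro allI impI)
    fix z assume "NI z" then show "\<delta> z = (if z \<in> W then t z else s z)" using n sk by simp
  qed
  then show ?thesis using r by blast
qed

end



fun isPv :: "vtx \<Rightarrow> bool" where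
  "isPv (Pv _ _ _) = True" | "isPv _ = False"

lemma k8: "(k::nat) < 8 \<Longrightarrow> k = 0 \<or> k = 1 \<or> k = 2 \<or> k = 3 \<or> k = 4 \<or> k = 5 \<or> k = 6 \<or> k = 7"
  by arith

lemma gpath_expl: "gpath e uv k = [fst (pspecs e uv ! k), Pv e k 1, Pv e k 2, Pv e k 3, Pv e k 4, Pv e k 5, fst (snd (pspecs e uv ! k))]"
  by (simp add: gpath_def upt_rec)

lemma ends_shape: "k < 8 \<Longrightarrow> fst (pspecs e uv ! k) \<in> {Orig (fst uv), Orig (snd uv), Xv e, Yv e} \<and>
   fst (snd (pspecs e uv ! k)) \<in> {Xv e, Yv e, Zv e}"
  by (drule k8) (auto simp: pspecs_def Let_def)

lemma ends_notPv: "k < 8 \<Longrightarrow> \<not> isPv (fst (pspecs e uv ! k)) \<and> \<not> isPv (fst (snd (pspecs e uv ! k)))"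
  using ends_shape[of k e uv] by auto

lemma ends_notABCD: "k < 8 \<Longrightarrow> fst (pspecs e uv ! k) \<notin> {Av,Bv,Cv,Dv} \<and> fst (snd (pspecs e uv ! k)) \<notin> {Av,Bv,Cv,Dv}"
  using ends_shape[of k e uv] by auto

lemma gp_set: "set (gpath e uv k) = {fst (pspecs e uv ! k), Pv e k 1, Pv e k 2, Pv e k 3, Pv e k 4, Pv e k 5, fst (snd (pspecs e uv ! k))}"
  by (simp add: gpath_expl)

lemma gp_int: "set (butlast (tl (gpath e uv k))) = {Pv e k 1, Pv e k 2, Pv e k 3, Pv e k 4, Pv e k 5}"
  by (simp add: gpath_expl)

lemma gp_len: "length (gpath e uv k) = 7" by (simp add: gpath_expl)

lemma i7: "(i::nat) < 7 \<Longrightarrow> i = 0 \<or> i = 1 \<or> i = 2 \<or> i = 3 \<or> i = 4 \<or> i = 5 \<or> i = 6"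
  by arith

lemma gp_nth_Pv: "k' < 8 \<Longrightarrow> i' < 7 \<Longrightarrow> gpath e' uv k' ! i' = Pv e k i \<Longrightarrow> e' = e \<and> k' = k"
  using ends_notPv[of k' e' uv] by (drule_tac i7) (auto simp: gpath_expl)

lemma gp_nth_notABCD: "k < 8 \<Longrightarrow> i < 7 \<Longrightarrow> gpath e uv k ! i \<notin> {Av,Bv,Cv,Dv}"
proof -
  assume "k < 8" "i < 7"
  then have "gpath e uv k ! i \<in> set (gpath e uv k)" by (simp add: gp_len)
  then show ?thesis using ends_notABCD[OF \<open>k<8\<close>, of e uv] unfolding gp_set by auto
qed

lemma gp_edge_Pv: "i < 6 \<Longrightarrow> isPv (gpath e uv k ! i) \<or> isPv (gpath e uv k ! Suc i)"
  by (drule_tac i7[of "Suc i", simplified]) (auto simp: gpath_expl)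




locale gc =
  fixes V :: "nat set" and E :: "nat set set" and ori :: "nat set \<Rightarrow> nat \<times> nat"
    and Lint :: "nat set \<Rightarrow> nat \<Rightarrow> nat \<Rightarrow> nat set" and aint :: "nat set \<Rightarrow> nat \<Rightarrow> nat \<Rightarrow> nat"
    and f :: "nat \<Rightarrow> nat"
  assumes og: "oriented_graph V E ori" and vc: "valid_construction V E ori Lint aint"
    and fV: "\<forall>v\<in>V. f v \<in> {1,2,3}" and fE: "\<forall>e\<in>E. \<forall>u\<in>e. \<forall>v\<in>e. u \<noteq> v \<longrightarrow> f u \<noteq> f v"
begin

lemma finE: "finite E"
proof -
  have "E \<subseteq> Pow V" using og unfolding oriented_graph_def by auto
  moreover have "finite V" using og unfolding oriented_graph_def by auto
  ultimately show ?thesis using finite_subset by blast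
qed

lemma eori: "e \<in> E \<Longrightarrow> e = {fst (ori e), snd (ori e)} \<and> e \<subseteq> V \<and> fst (ori e) \<noteq> snd (ori e)"
  using og unfolding oriented_graph_def by (metis card_2_iff doubleton_eq_iff)

lemma uvV: "e \<in> E \<Longrightarrow> fst (ori e) \<in> V \<and> snd (ori e) \<in> V"
  using eori by blast

lemma fuv: "e \<in> E \<Longrightarrow> f (fst (ori e)) \<noteq> f (snd (ori e)) \<and> f (fst (ori e)) \<in> {1,2,3} \<and> f (snd (ori e)) \<in> {1,2,3}"
  using eori[of e] fE fV by (metis insertCI subsetD)

lemma gp_sub: "e \<in> E \<Longrightarrow> k < 8 \<Longrightarrow> set (gpath e (ori e) k) \<subseteq> Gp_V V E"
  using ends_shape[of k e "ori e"] uvV[of e] unfolding gp_set Gp_V_def by auto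

lemma gp_edge_in: "e \<in> E \<Longrightarrow> k < 8 \<Longrightarrow> i < 6 \<Longrightarrow>
   (gpath e (ori e) k ! i, gpath e (ori e) k ! Suc i) \<in> Gp_edges E ori"
proof -
  assume a: "e \<in> E" "k < 8" "i < 6"
  have "(gpath e (ori e) k ! i, gpath e (ori e) k ! Suc i) \<in>
     {(gpath e (ori e) k ! i, gpath e (ori e) k ! Suc i) | e k i. e \<in> E \<and> k < 8 \<and> i < 6}"
    using a by blast
  then show ?thesis unfolding Gp_edges_def by (intro UnI1 UnI2)
qed

lemma gp_padj: "e \<in> E \<Longrightarrow> k < 8 \<Longrightarrow> path_adj (gpath e (ori e) k) x y \<Longrightarrow> Gp_adj E ori x y"
proof -
  assume a: "e \<in> E" "k < 8" "path_adj (gpath e (ori e) k) x y"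
  then obtain i where i: "Suc i < 7" and
    c: "(gpath e (ori e) k ! i = x \<and> gpath e (ori e) k ! Suc i = y) \<or> (gpath e (ori e) k ! i = y \<and> gpath e (ori e) k ! Suc i = x)"
    unfolding path_adj_def gp_len by blast
  have "i < 6" using i by simp
  from gp_edge_in[OF a(1,2) this] c show ?thesis unfolding Gp_adj_def by blast
qed

lemma Gp_adj_sym: "Gp_adj E ori x y \<longleftrightarrow> Gp_adj E ori y x"
  unfolding Gp_adj_def by auto

lemma Gp_edges_cases: "(x, y) \<in> Gp_edges E ori \<Longrightarrow>
  (\<exists>e\<in>E. x = Orig (fst (ori e)) \<and> (y = Xv e \<or> y = Yv e)) \<or>
  (\<exists>e k i. e \<in> E \<and> k < 8 \<and> i < 6 \<and> x = gpath e (ori e) k ! i \<and> y = gpath e (ori e) k ! Suc i) \<or>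
  (x, y) \<in> {(Av, Bv), (Av, Cv), (Av, Dv), (Bv, Cv), (Bv, Dv)} \<or>
  (\<exists>e\<in>E. x = Zv e \<and> y = Cv)"
  unfolding Gp_edges_def by blast

lemma gp_iadj1:
  assumes e: "e \<in> E" and k: "k < 8" and x: "x \<in> set (butlast (tl (gpath e (ori e) k)))"
    and xy: "(x, y) \<in> Gp_edges E ori"
  shows "path_adj (gpath e (ori e) k) x y"
proof -
  obtain i where xi: "x = Pv e k i" using x unfolding gp_int by auto
  from Gp_edges_cases[OF xy] xi obtain e' k' i' where e': "e' \<in> E" "k' < 8" "i' < 6"
    and eq: "x = gpath e' (ori e') k' ! i'" "y = gpath e' (ori e') k' ! Suc i'"
    by auto
  then have "e' = e \<and> k' = k" using gp_nth_Pv[of k' i' e' "ori e'" e k i] xi by simp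
  then show ?thesis using eq e' unfolding path_adj_def gp_len by auto
qed

lemma gp_iadj:
  assumes e: "e \<in> E" and k: "k < 8" and x: "x \<in> set (butlast (tl (gpath e (ori e) k)))"
    and xy: "Gp_adj E ori x y \<or> Gp_adj E ori y x"
  shows "path_adj (gpath e (ori e) k) x y"
proof -
  have "(x, y) \<in> Gp_edges E ori \<or> (y, x) \<in> Gp_edges E ori" using xy unfolding Gp_adj_def by auto
  moreover have "(y, x) \<in> Gp_edges E ori \<Longrightarrow> path_adj (gpath e (ori e) k) x y"
  proof -
    assume yx: "(y, x) \<in> Gp_edges E ori"
    obtain i where xi: "x = Pv e k i" using x unfolding gp_int by auto
    from Gp_edges_cases[OF yx] xi obtain e' k' i' where e': "e' \<in> E" "k' < 8" "i' < 6"
      and eq: "y = gpath e' (ori e') k' ! i'" "x = gpath e' (ori e') k' ! Suc i'"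
      by auto
    then have "e' = e \<and> k' = k" using gp_nth_Pv[of k' "Suc i'" e' "ori e'" e k i] xi by simp
    then show ?thesis using eq e' unfolding path_adj_def gp_len by auto
  qed
  ultimately show ?thesis using gp_iadj1[OF e k x] by blast
qed

lemma gp_uniq:
  assumes "e \<in> E" "k < 8" "e' \<in> E" "k' < 8" "x \<in> set (butlast (tl (gpath e (ori e) k)))"
    "x \<in> set (gpath e' (ori e') k')"
  shows "e = e' \<and> k = k'"
proof -
  obtain i where xi: "x = Pv e k i" using assms(5) unfolding gp_int by auto
  then have "isPv x" by simp
  then have "x \<noteq> fst (pspecs e' (ori e') ! k')" "x \<noteq> fst (snd (pspecs e' (ori e') ! k'))"
    using ends_notPv[OF assms(4), of e' "ori e'"] by auto
  then have "x \<in> {Pv e' k' 1, Pv e' k' 2, Pv e' k' 3, Pv e' k' 4, Pv e' k' 5}" using assms(6) unfolding gp_set by simp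
  then show ?thesis using xi by auto
qed

sublocale psys "Gp_V V E" "Gp_adj E ori" "Gp_L Lint" "E \<times> {0..<8}"
  "\<lambda>j. gpath (fst j) (ori (fst j)) (snd j)" "\<lambda>j. path_a (fst j) (ori (fst j)) (snd j)"
  "\<lambda>j. path_b (fst j) (ori (fst j)) (snd j)"
proof
  show "finite (E \<times> {0..<8::nat})" using finE by simp
next
  fix j assume "j \<in> E \<times> {0..<8::nat}"
  then show "forbidding (path_a (fst j) (ori (fst j)) (snd j)) (path_b (fst j) (ori (fst j)) (snd j))
     (gpath (fst j) (ori (fst j)) (snd j)) (Gp_L Lint)"
    using vc unfolding valid_construction_def by auto
next
  fix j assume "j \<in> E \<times> {0..<8::nat}"
  then show "length (gpath (fst j) (ori (fst j)) (snd j)) = 7" by (simp add: gp_len)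
next
  fix j assume "j \<in> E \<times> {0..<8::nat}"
  then show "set (gpath (fst j) (ori (fst j)) (snd j)) \<subseteq> Gp_V V E" using gp_sub[of "fst j" "snd j"] by auto
next
  fix j x y assume "j \<in> E \<times> {0..<8::nat}" "path_adj (gpath (fst j) (ori (fst j)) (snd j)) x y"
  then show "Gp_adj E ori x y" using gp_padj by auto
next
  fix j x y assume "j \<in> E \<times> {0..<8::nat}" "x \<in> set (butlast (tl (gpath (fst j) (ori (fst j)) (snd j))))"
    "y \<in> Gp_V V E" "Gp_adj E ori x y \<or> Gp_adj E ori y x"
  then show "path_adj (gpath (fst j) (ori (fst j)) (snd j)) x y" using gp_iadj by auto
next
  fix j j' x assume "j \<in> E \<times> {0..<8::nat}" "j' \<in> E \<times> {0..<8::nat}"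
    "x \<in> set (butlast (tl (gpath (fst j) (ori (fst j)) (snd j))))"
    "x \<in> set (gpath (fst j') (ori (fst j')) (snd j'))"
  then show "j = j'" using gp_uniq[of "fst j" "snd j" "fst j'" "snd j'" x] by (auto simp: prod_eq_iff)
qed

end



context gc begin

lemma NI_notPv: "\<not> isPv z \<Longrightarrow> NI z"
  unfolding NI_def gp_int by auto

lemma NI_isPv: "z \<in> Gp_V V E \<Longrightarrow> NI z \<Longrightarrow> \<not> isPv z"
proof
  assume z: "z \<in> Gp_V V E" "NI z" "isPv z"
  then obtain e k i where zz: "z = Pv e k i" by (cases z) auto
  then have "e \<in> E \<and> k < 8 \<and> 1 \<le> i \<and> i \<le> 5" using z(1) unfolding Gp_V_def by auto
  then have "(e, k) \<in> E \<times> {0..<8}" "z \<in> set (butlast (tl (gpath e (ori e) k)))"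
    using zz unfolding gp_int by auto
  then show False using z(2) unfolding NI_def by force
qed

lemma edge_np: "(w, y) \<in> Gp_edges E ori \<Longrightarrow> \<not> isPv w \<Longrightarrow> \<not> isPv y \<Longrightarrow>
  (\<exists>e\<in>E. w = Orig (fst (ori e)) \<and> (y = Xv e \<or> y = Yv e)) \<or>
  (w, y) \<in> {(Av, Bv), (Av, Cv), (Av, Dv), (Bv, Cv), (Bv, Dv)} \<or>
  (\<exists>e\<in>E. w = Zv e \<and> y = Cv)"
proof -
  assume a: "(w, y) \<in> Gp_edges E ori" "\<not> isPv w" "\<not> isPv y"
  have "\<not> (\<exists>e k i. e \<in> E \<and> k < 8 \<and> i < 6 \<and> w = gpath e (ori e) k ! i \<and> y = gpath e (ori e) k ! Suc i)"
    using gp_edge_Pv a(2,3) by blast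
  then show ?thesis using Gp_edges_cases[OF a(1)] by blast
qed

lemma edge_A: "(w, y) \<in> Gp_edges E ori \<Longrightarrow> w \<in> {Av,Bv} \<or> y \<in> {Av,Bv} \<Longrightarrow>
   (w, y) \<in> {(Av, Bv), (Av, Cv), (Av, Dv), (Bv, Cv), (Bv, Dv)}"
proof -
  assume a: "(w, y) \<in> Gp_edges E ori" "w \<in> {Av,Bv} \<or> y \<in> {Av,Bv}"
  have "\<not> (\<exists>e k i. e \<in> E \<and> k < 8 \<and> i < 6 \<and> w = gpath e (ori e) k ! i \<and> y = gpath e (ori e) k ! Suc i)"
  proof
    assume "\<exists>e k i. e \<in> E \<and> k < 8 \<and> i < 6 \<and> w = gpath e (ori e) k ! i \<and> y = gpath e (ori e) k ! Suc i"
    then obtain e k i where "k < 8" "i < 6" "w = gpath e (ori e) k ! i" "y = gpath e (ori e) k ! Suc i" by blast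
    then show False using gp_nth_notABCD[of k i e "ori e"] gp_nth_notABCD[of k "Suc i" e "ori e"] a(2) by auto
  qed
  then show ?thesis using Gp_edges_cases[OF a(1)] a(2) by auto
qed

lemma prop135: "A \<or> C \<or> E' \<Longrightarrow> A \<or> B \<or> C \<or> D \<or> E' \<or> F'" by blast
lemma prop246: "B \<or> D \<or> F' \<Longrightarrow> A \<or> B \<or> C \<or> D \<or> E' \<or> F'" by blast

lemma adj_np: "Gp_adj E ori w y \<or> Gp_adj E ori y w \<Longrightarrow> \<not> isPv w \<Longrightarrow> \<not> isPv y \<Longrightarrow>
  (\<exists>e\<in>E. w = Orig (fst (ori e)) \<and> (y = Xv e \<or> y = Yv e)) \<or>
  (\<exists>e\<in>E. y = Orig (fst (ori e)) \<and> (w = Xv e \<or> w = Yv e)) \<or>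
  (w, y) \<in> {(Av, Bv), (Av, Cv), (Av, Dv), (Bv, Cv), (Bv, Dv)} \<or>
  (y, w) \<in> {(Av, Bv), (Av, Cv), (Av, Dv), (Bv, Cv), (Bv, Dv)} \<or>
  (\<exists>e\<in>E. w = Zv e \<and> y = Cv) \<or> (\<exists>e\<in>E. y = Zv e \<and> w = Cv)"
proof -
  assume a: "Gp_adj E ori w y \<or> Gp_adj E ori y w" "\<not> isPv w" "\<not> isPv y"
  then have "(w, y) \<in> Gp_edges E ori \<or> (y, w) \<in> Gp_edges E ori" unfolding Gp_adj_def by blast
  then show ?thesis
  proof
    assume "(w, y) \<in> Gp_edges E ori" then show ?thesis by (rule prop135[OF edge_np[OF _ a(2,3)]])
  next
    assume "(y, w) \<in> Gp_edges E ori" then show ?thesis by (rule prop246[OF edge_np[OF _ a(3,2)]])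
  qed
qed

lemma adj_AB: "Gp_adj E ori w y \<Longrightarrow> w \<in> {Av,Bv} \<or> y \<in> {Av,Bv} \<Longrightarrow>
  (w, y) \<in> {(Av, Bv), (Av, Cv), (Av, Dv), (Bv, Cv), (Bv, Dv)} \<or>
  (y, w) \<in> {(Av, Bv), (Av, Cv), (Av, Dv), (Bv, Cv), (Bv, Dv)}"
proof -
  assume a: "Gp_adj E ori w y" "w \<in> {Av,Bv} \<or> y \<in> {Av,Bv}"
  have a2: "y \<in> {Av,Bv} \<or> w \<in> {Av,Bv}" using a(2) by (rule disjE) (rule disjI2, assumption, rule disjI1)
  have "(w, y) \<in> Gp_edges E ori \<or> (y, w) \<in> Gp_edges E ori" using a(1) unfolding Gp_adj_def .
  then show ?thesis
  proof
    assume "(w, y) \<in> Gp_edges E ori" then show ?thesis by (rule disjI1[OF edge_A[OF _ a(2)]])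
  next
    assume "(y, w) \<in> Gp_edges E ori" then show ?thesis by (rule disjI2[OF edge_A[OF _ a2]])
  qed
qed

end



lemma ptab: "k < 8 \<Longrightarrow> (gpath e uv k ! 0, gpath e uv k ! 6, path_a e uv k, path_b e uv k) \<in>
  {(Orig (fst uv), Xv e, 1, 2), (Orig (fst uv), Xv e, 3, 1), (Orig (fst uv), Yv e, 2, 3),
   (Orig (snd uv), Xv e, 2, 1), (Orig (snd uv), Xv e, 3, 2), (Orig (snd uv), Yv e, 1, 3),
   (Xv e, Zv e, 4, 1), (Yv e, Zv e, 4, 2)}"
  by (drule k8) (auto simp: gpath_expl pspecs_def Let_def path_a_def path_b_def)

context gc begin

definition "xt e = (if f (fst (ori e)) = 2 then 1 else if f (fst (ori e)) = 3 then 2 else (4::nat))"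
definition "yt e = (if f (fst (ori e)) = 1 then 3 else (4::nat))"
definition "zt e = (if f (fst (ori e)) = 1 then 2 else (1::nat))"

definition "W1 = Orig ` (\<Union>E)"
definition "t1 z = (case z of Orig u \<Rightarrow> f u | _ \<Rightarrow> 0)"
definition "s0 = Gp_alpha aint"
definition "s1 z = (if z \<in> W1 then t1 z else s0 z)"
definition "W2 = Xv ` E \<union> Yv ` E"
definition "t2 z = (case z of Xv e \<Rightarrow> xt e | Yv e \<Rightarrow> yt e | _ \<Rightarrow> 0)"
definition "s2 z = (if z \<in> W2 then t2 z else s1 z)"
definition "W3 = Zv ` E"
definition "t3 z = (case z of Zv e \<Rightarrow> zt e | _ \<Rightarrow> 0)"
definition "s3 z = (if z \<in> W3 then t3 z else s2 z)"
definition "W4 = {Cv}"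
definition "t4 (z::vtx) = (4::nat)"
definition "s4 z = (if z \<in> W4 then t4 z else s3 z)"

lemma jI: "j \<in> E \<times> {0..<8} \<Longrightarrow> fst j \<in> E \<and> snd j < 8" by auto

lemma phase1:
  assumes cg: "is_Lcol (Gp_V V E) (Gp_adj E ori) (Gp_L Lint) \<gamma>" and sk: "\<forall>z. NI z \<longrightarrow> \<gamma> z = s0 z"
  shows "\<exists>\<delta>. reach (Gp_V V E) (Gp_adj E ori) (Gp_L Lint) (5 * card (E \<times> {0..<8::nat}) + card W1) \<gamma> \<delta>
     \<and> (\<forall>z. NI z \<longrightarrow> \<delta> z = s1 z)"
  unfolding s1_def
proof (rule phase'[OF cg sk])
  show "finite W1" unfolding W1_def using finE eori finite_subset og unfolding oriented_graph_def
    by (metis finite_Union finite_imageI)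
  show "W1 \<subseteq> Gp_V V E" unfolding W1_def Gp_V_def using eori by blast
  show "\<forall>w\<in>W1. NI w" unfolding W1_def using NI_notPv by auto
  show "\<forall>w\<in>W1. t1 w \<in> Gp_L Lint w" unfolding W1_def t1_def using eori fV by fastforce
  show "\<forall>w\<in>W1. \<forall>y\<in>Gp_V V E. (Gp_adj E ori w y \<or> Gp_adj E ori y w) \<longrightarrow> NI y \<longrightarrow> y \<notin> W1 \<and> t1 w \<noteq> s0 y"
  proof (intro ballI impI)
    fix w y assume w: "w \<in> W1" and y: "y \<in> Gp_V V E" and a: "Gp_adj E ori w y \<or> Gp_adj E ori y w" and n: "NI y"
    obtain u where u: "w = Orig u" "u \<in> \<Union>E" using w unfolding W1_def by blast
    have "f u \<in> {1,2,3}" using u(2) eori fV by blast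
    moreover have "\<exists>e\<in>E. y = Xv e \<or> y = Yv e"
      using adj_np[OF a _ NI_isPv[OF y n]] u by auto
    ultimately show "y \<notin> W1 \<and> t1 w \<noteq> s0 y" unfolding W1_def t1_def s0_def using u by auto
  qed
  show "\<forall>j\<in>E \<times> {0..<8}. gpath (fst j) (ori (fst j)) (snd j) ! 0 \<in> W1 \<longrightarrow>
      gpath (fst j) (ori (fst j)) (snd j) ! 6 \<notin> W1 \<and>
      (t1 (gpath (fst j) (ori (fst j)) (snd j) ! 0) \<noteq> path_a (fst j) (ori (fst j)) (snd j) \<or>
       s0 (gpath (fst j) (ori (fst j)) (snd j) ! 6) \<noteq> path_b (fst j) (ori (fst j)) (snd j))"
  proof (intro ballI impI)
    fix j assume j: "j \<in> E \<times> {0..<8::nat}"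
    have k: "snd j < 8" using j by auto
    from ptab[OF k, of "fst j" "ori (fst j)"] show "gpath (fst j) (ori (fst j)) (snd j) ! 6 \<notin> W1 \<and>
      (t1 (gpath (fst j) (ori (fst j)) (snd j) ! 0) \<noteq> path_a (fst j) (ori (fst j)) (snd j) \<or>
       s0 (gpath (fst j) (ori (fst j)) (snd j) ! 6) \<noteq> path_b (fst j) (ori (fst j)) (snd j))"
      unfolding W1_def s0_def by auto
  qed
  show "\<forall>j\<in>E \<times> {0..<8}. gpath (fst j) (ori (fst j)) (snd j) ! 6 \<in> W1 \<longrightarrow>
      gpath (fst j) (ori (fst j)) (snd j) ! 0 \<notin> W1 \<and>
      (s0 (gpath (fst j) (ori (fst j)) (snd j) ! 0) \<noteq> path_a (fst j) (ori (fst j)) (snd j) \<or>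
       t1 (gpath (fst j) (ori (fst j)) (snd j) ! 6) \<noteq> path_b (fst j) (ori (fst j)) (snd j))"
  proof (intro ballI impI)
    fix j assume j: "j \<in> E \<times> {0..<8::nat}" and h: "gpath (fst j) (ori (fst j)) (snd j) ! 6 \<in> W1"
    have k: "snd j < 8" using j by auto
    from ptab[OF k, of "fst j" "ori (fst j)"] have False using h unfolding W1_def by auto
    then show "gpath (fst j) (ori (fst j)) (snd j) ! 0 \<notin> W1 \<and>
      (s0 (gpath (fst j) (ori (fst j)) (snd j) ! 0) \<noteq> path_a (fst j) (ori (fst j)) (snd j) \<or>
       t1 (gpath (fst j) (ori (fst j)) (snd j) ! 6) \<noteq> path_b (fst j) (ori (fst j)) (snd j))" by simp
  qed
qed

lemma phase2:
  assumes cg: "is_Lcol (Gp_V V E) (Gp_adj E ori) (Gp_L Lint) \<gamma>" and sk: "\<forall>z. NI z \<longrightarrow> \<gamma> z = s1 z"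
  shows "\<exists>\<delta>. reach (Gp_V V E) (Gp_adj E ori) (Gp_L Lint) (5 * card (E \<times> {0..<8::nat}) + card W2) \<gamma> \<delta>
     \<and> (\<forall>z. NI z \<longrightarrow> \<delta> z = s2 z)"
  unfolding s2_def
proof (rule phase'[OF cg sk])
  show "finite W2" unfolding W2_def using finE by simp
  show "W2 \<subseteq> Gp_V V E" unfolding W2_def Gp_V_def by blast
  show "\<forall>w\<in>W2. NI w" unfolding W2_def using NI_notPv by auto
  show "\<forall>w\<in>W2. t2 w \<in> Gp_L Lint w" unfolding W2_def t2_def xt_def yt_def by auto
  show "\<forall>w\<in>W2. \<forall>y\<in>Gp_V V E. (Gp_adj E ori w y \<or> Gp_adj E ori y w) \<longrightarrow> NI y \<longrightarrow> y \<notin> W2 \<and> t2 w \<noteq> s1 y"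
  proof (intro ballI impI)
    fix w y assume w: "w \<in> W2" and y: "y \<in> Gp_V V E" and a: "Gp_adj E ori w y \<or> Gp_adj E ori y w" and n: "NI y"
    have "\<exists>e\<in>E. y = Orig (fst (ori e)) \<and> (w = Xv e \<or> w = Yv e)"
      using adj_np[OF a _ NI_isPv[OF y n]] w unfolding W2_def by auto
    then obtain e where e: "e \<in> E" "y = Orig (fst (ori e))" "w = Xv e \<or> w = Yv e" by blast
    have "fst (ori e) \<in> \<Union>E" using e(1) eori by blast
    then have "s1 y = f (fst (ori e))" using e unfolding s1_def W1_def t1_def by auto
    then show "y \<notin> W2 \<and> t2 w \<noteq> s1 y" using e fuv[OF e(1)] unfolding W2_def t2_def xt_def yt_def by auto
  qed
  show "\<forall>j\<in>E \<times> {0..<8}. gpath (fst j) (ori (fst j)) (snd j) ! 0 \<in> W2 \<longrightarrow>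
      gpath (fst j) (ori (fst j)) (snd j) ! 6 \<notin> W2 \<and>
      (t2 (gpath (fst j) (ori (fst j)) (snd j) ! 0) \<noteq> path_a (fst j) (ori (fst j)) (snd j) \<or>
       s1 (gpath (fst j) (ori (fst j)) (snd j) ! 6) \<noteq> path_b (fst j) (ori (fst j)) (snd j))"
  proof (intro ballI impI)
    fix j assume j: "j \<in> E \<times> {0..<8::nat}" and h: "gpath (fst j) (ori (fst j)) (snd j) ! 0 \<in> W2"
    have k: "snd j < 8" and e: "fst j \<in> E" using j by auto
    from ptab[OF k, of "fst j" "ori (fst j)"] show "gpath (fst j) (ori (fst j)) (snd j) ! 6 \<notin> W2 \<and>
      (t2 (gpath (fst j) (ori (fst j)) (snd j) ! 0) \<noteq> path_a (fst j) (ori (fst j)) (snd j) \<or>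
       s1 (gpath (fst j) (ori (fst j)) (snd j) ! 6) \<noteq> path_b (fst j) (ori (fst j)) (snd j))"
      using h e unfolding W2_def W1_def s1_def t2_def s0_def by auto
  qed
  show "\<forall>j\<in>E \<times> {0..<8}. gpath (fst j) (ori (fst j)) (snd j) ! 6 \<in> W2 \<longrightarrow>
      gpath (fst j) (ori (fst j)) (snd j) ! 0 \<notin> W2 \<and>
      (s1 (gpath (fst j) (ori (fst j)) (snd j) ! 0) \<noteq> path_a (fst j) (ori (fst j)) (snd j) \<or>
       t2 (gpath (fst j) (ori (fst j)) (snd j) ! 6) \<noteq> path_b (fst j) (ori (fst j)) (snd j))"
  proof (intro ballI impI)
    fix j assume j: "j \<in> E \<times> {0..<8::nat}" and h: "gpath (fst j) (ori (fst j)) (snd j) ! 6 \<in> W2"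
    have k: "snd j < 8" and e: "fst j \<in> E" using j by auto
    from ptab[OF k, of "fst j" "ori (fst j)"] show "gpath (fst j) (ori (fst j)) (snd j) ! 0 \<notin> W2 \<and>
      (s1 (gpath (fst j) (ori (fst j)) (snd j) ! 0) \<noteq> path_a (fst j) (ori (fst j)) (snd j) \<or>
       t2 (gpath (fst j) (ori (fst j)) (snd j) ! 6) \<noteq> path_b (fst j) (ori (fst j)) (snd j))"
      proof -
      assume pt: "(gpath (fst j) (ori (fst j)) (snd j) ! 0, gpath (fst j) (ori (fst j)) (snd j) ! 6,
        path_a (fst j) (ori (fst j)) (snd j), path_b (fst j) (ori (fst j)) (snd j)) \<in>
        {(Orig (fst (ori (fst j))), Xv (fst j), 1, 2), (Orig (fst (ori (fst j))), Xv (fst j), 3, 1), (Orig (fst (ori (fst j))), Yv (fst j), 2, 3),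
         (Orig (snd (ori (fst j))), Xv (fst j), 2, 1), (Orig (snd (ori (fst j))), Xv (fst j), 3, 2), (Orig (snd (ori (fst j))), Yv (fst j), 1, 3),
         (Xv (fst j), Zv (fst j), 4, 1), (Yv (fst j), Zv (fst j), 4, 2)}"
      have m: "fst (ori (fst j)) \<in> \<Union>E" "snd (ori (fst j)) \<in> \<Union>E" using e eori by blast+
      note fu = fuv[OF e]
      have X: "f (fst (ori (fst j))) \<noteq> 1 \<or> xt (fst j) \<noteq> 2" "f (fst (ori (fst j))) \<noteq> 3 \<or> xt (fst j) \<noteq> 1"
        "f (fst (ori (fst j))) \<noteq> 2 \<or> yt (fst j) \<noteq> 3" "f (snd (ori (fst j))) \<noteq> 2 \<or> xt (fst j) \<noteq> 1"
        "f (snd (ori (fst j))) \<noteq> 3 \<or> xt (fst j) \<noteq> 2" "f (snd (ori (fst j))) \<noteq> 1 \<or> yt (fst j) \<noteq> 3"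
        using fu unfolding xt_def yt_def by auto
      have s1o: "s1 (Orig (fst (ori (fst j)))) = f (fst (ori (fst j)))" "s1 (Orig (snd (ori (fst j)))) = f (snd (ori (fst j)))"
        using m unfolding s1_def W1_def t1_def by auto
      show ?thesis using pt
        by (elim insertE emptyE) (use h e X s1o in \<open>auto simp: W2_def t2_def\<close>)
    qed
  qed
qed

lemma phase3:
  assumes cg: "is_Lcol (Gp_V V E) (Gp_adj E ori) (Gp_L Lint) \<gamma>" and sk: "\<forall>z. NI z \<longrightarrow> \<gamma> z = s2 z"
  shows "\<exists>\<delta>. reach (Gp_V V E) (Gp_adj E ori) (Gp_L Lint) (5 * card (E \<times> {0..<8::nat}) + card W3) \<gamma> \<delta>
     \<and> (\<forall>z. NI z \<longrightarrow> \<delta> z = s3 z)"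
  unfolding s3_def
proof (rule phase'[OF cg sk])
  show "finite W3" unfolding W3_def using finE by simp
  show "W3 \<subseteq> Gp_V V E" unfolding W3_def Gp_V_def by blast
  show "\<forall>w\<in>W3. NI w" unfolding W3_def using NI_notPv by auto
  show "\<forall>w\<in>W3. t3 w \<in> Gp_L Lint w" unfolding W3_def t3_def zt_def by auto
  show "\<forall>w\<in>W3. \<forall>y\<in>Gp_V V E. (Gp_adj E ori w y \<or> Gp_adj E ori y w) \<longrightarrow> NI y \<longrightarrow> y \<notin> W3 \<and> t3 w \<noteq> s2 y"
  proof (intro ballI impI)
    fix w y assume w: "w \<in> W3" and y: "y \<in> Gp_V V E" and a: "Gp_adj E ori w y \<or> Gp_adj E ori y w" and n: "NI y"
    have "\<exists>e\<in>E. w = Zv e \<and> y = Cv"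
      using adj_np[OF a _ NI_isPv[OF y n]] w unfolding W3_def by auto
    then show "y \<notin> W3 \<and> t3 w \<noteq> s2 y" unfolding W3_def t3_def zt_def s2_def s1_def W2_def W1_def s0_def by (auto split: if_splits)
  qed
  show "\<forall>j\<in>E \<times> {0..<8}. gpath (fst j) (ori (fst j)) (snd j) ! 0 \<in> W3 \<longrightarrow>
      gpath (fst j) (ori (fst j)) (snd j) ! 6 \<notin> W3 \<and>
      (t3 (gpath (fst j) (ori (fst j)) (snd j) ! 0) \<noteq> path_a (fst j) (ori (fst j)) (snd j) \<or>
       s2 (gpath (fst j) (ori (fst j)) (snd j) ! 6) \<noteq> path_b (fst j) (ori (fst j)) (snd j))"
  proof (intro ballI impI)
    fix j assume j: "j \<in> E \<times> {0..<8::nat}" and h: "gpath (fst j) (ori (fst j)) (snd j) ! 0 \<in> W3"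
    have k: "snd j < 8" and e: "fst j \<in> E" using j by auto
    from ptab[OF k, of "fst j" "ori (fst j)"] show "gpath (fst j) (ori (fst j)) (snd j) ! 6 \<notin> W3 \<and>
      (t3 (gpath (fst j) (ori (fst j)) (snd j) ! 0) \<noteq> path_a (fst j) (ori (fst j)) (snd j) \<or>
       s2 (gpath (fst j) (ori (fst j)) (snd j) ! 6) \<noteq> path_b (fst j) (ori (fst j)) (snd j))"
      using h e unfolding W3_def by auto
  qed
  show "\<forall>j\<in>E \<times> {0..<8}. gpath (fst j) (ori (fst j)) (snd j) ! 6 \<in> W3 \<longrightarrow>
      gpath (fst j) (ori (fst j)) (snd j) ! 0 \<notin> W3 \<and>
      (s2 (gpath (fst j) (ori (fst j)) (snd j) ! 0) \<noteq> path_a (fst j) (ori (fst j)) (snd j) \<or>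
       t3 (gpath (fst j) (ori (fst j)) (snd j) ! 6) \<noteq> path_b (fst j) (ori (fst j)) (snd j))"
  proof (intro ballI impI)
    fix j assume j: "j \<in> E \<times> {0..<8::nat}" and h: "gpath (fst j) (ori (fst j)) (snd j) ! 6 \<in> W3"
    have k: "snd j < 8" and e: "fst j \<in> E" using j by auto
    from ptab[OF k, of "fst j" "ori (fst j)"] show "gpath (fst j) (ori (fst j)) (snd j) ! 0 \<notin> W3 \<and>
      (s2 (gpath (fst j) (ori (fst j)) (snd j) ! 0) \<noteq> path_a (fst j) (ori (fst j)) (snd j) \<or>
       t3 (gpath (fst j) (ori (fst j)) (snd j) ! 6) \<noteq> path_b (fst j) (ori (fst j)) (snd j))"
    proof -
      assume pt: "(gpath (fst j) (ori (fst j)) (snd j) ! 0, gpath (fst j) (ori (fst j)) (snd j) ! 6,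
        path_a (fst j) (ori (fst j)) (snd j), path_b (fst j) (ori (fst j)) (snd j)) \<in>
        {(Orig (fst (ori (fst j))), Xv (fst j), 1, 2), (Orig (fst (ori (fst j))), Xv (fst j), 3, 1), (Orig (fst (ori (fst j))), Yv (fst j), 2, 3),
         (Orig (snd (ori (fst j))), Xv (fst j), 2, 1), (Orig (snd (ori (fst j))), Xv (fst j), 3, 2), (Orig (snd (ori (fst j))), Yv (fst j), 1, 3),
         (Xv (fst j), Zv (fst j), 4, 1), (Yv (fst j), Zv (fst j), 4, 2)}"
      have X: "xt (fst j) \<noteq> 4 \<or> zt (fst j) \<noteq> 1" "yt (fst j) \<noteq> 4 \<or> zt (fst j) \<noteq> 2"
        using fuv[OF e] unfolding xt_def yt_def zt_def by auto
      show ?thesis using pt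
        by (elim insertE emptyE) (use h e X in \<open>auto simp: W3_def W2_def s2_def t2_def t3_def\<close>)
    qed
  qed
qed

lemma phase4:
  assumes cg: "is_Lcol (Gp_V V E) (Gp_adj E ori) (Gp_L Lint) \<gamma>" and sk: "\<forall>z. NI z \<longrightarrow> \<gamma> z = s3 z"
  shows "\<exists>\<delta>. reach (Gp_V V E) (Gp_adj E ori) (Gp_L Lint) (5 * card (E \<times> {0..<8::nat}) + card W4) \<gamma> \<delta>
     \<and> (\<forall>z. NI z \<longrightarrow> \<delta> z = s4 z)"
  unfolding s4_def
proof (rule phase'[OF cg sk])
  show "finite W4" unfolding W4_def by simp
  show "W4 \<subseteq> Gp_V V E" unfolding W4_def Gp_V_def by blast
  show "\<forall>w\<in>W4. NI w" unfolding W4_def using NI_notPv by auto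
  show "\<forall>w\<in>W4. t4 w \<in> Gp_L Lint w" unfolding W4_def t4_def by auto
  show "\<forall>w\<in>W4. \<forall>y\<in>Gp_V V E. (Gp_adj E ori w y \<or> Gp_adj E ori y w) \<longrightarrow> NI y \<longrightarrow> y \<notin> W4 \<and> t4 w \<noteq> s3 y"
  proof (intro ballI impI)
    fix w y assume w: "w \<in> W4" and y: "y \<in> Gp_V V E" and a: "Gp_adj E ori w y \<or> Gp_adj E ori y w" and n: "NI y"
    have "y = Av \<or> y = Bv \<or> (\<exists>e\<in>E. y = Zv e)"
      using adj_np[OF a _ NI_isPv[OF y n]] w unfolding W4_def by auto
    then show "y \<notin> W4 \<and> t4 w \<noteq> s3 y" unfolding W4_def t4_def s3_def W3_def t3_def zt_def s2_def W2_def s1_def W1_def s0_def by (auto split: if_splits)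
  qed
  show "\<forall>j\<in>E \<times> {0..<8}. gpath (fst j) (ori (fst j)) (snd j) ! 0 \<in> W4 \<longrightarrow>
      gpath (fst j) (ori (fst j)) (snd j) ! 6 \<notin> W4 \<and>
      (t4 (gpath (fst j) (ori (fst j)) (snd j) ! 0) \<noteq> path_a (fst j) (ori (fst j)) (snd j) \<or>
       s3 (gpath (fst j) (ori (fst j)) (snd j) ! 6) \<noteq> path_b (fst j) (ori (fst j)) (snd j))"
  proof (intro ballI impI)
    fix j assume j: "j \<in> E \<times> {0..<8::nat}" and h: "gpath (fst j) (ori (fst j)) (snd j) ! 0 \<in> W4"
    have k: "snd j < 8" and e: "fst j \<in> E" using j by auto
    from ptab[OF k, of "fst j" "ori (fst j)"] show "gpath (fst j) (ori (fst j)) (snd j) ! 6 \<notin> W4 \<and>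
      (t4 (gpath (fst j) (ori (fst j)) (snd j) ! 0) \<noteq> path_a (fst j) (ori (fst j)) (snd j) \<or>
       s3 (gpath (fst j) (ori (fst j)) (snd j) ! 6) \<noteq> path_b (fst j) (ori (fst j)) (snd j))"
      using h e unfolding W4_def by auto
  qed
  show "\<forall>j\<in>E \<times> {0..<8}. gpath (fst j) (ori (fst j)) (snd j) ! 6 \<in> W4 \<longrightarrow>
      gpath (fst j) (ori (fst j)) (snd j) ! 0 \<notin> W4 \<and>
      (s3 (gpath (fst j) (ori (fst j)) (snd j) ! 0) \<noteq> path_a (fst j) (ori (fst j)) (snd j) \<or>
       t4 (gpath (fst j) (ori (fst j)) (snd j) ! 6) \<noteq> path_b (fst j) (ori (fst j)) (snd j))"
  proof (intro ballI impI)
    fix j assume j: "j \<in> E \<times> {0..<8::nat}" and h: "gpath (fst j) (ori (fst j)) (snd j) ! 6 \<in> W4"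
    have k: "snd j < 8" and e: "fst j \<in> E" using j by auto
    from ptab[OF k, of "fst j" "ori (fst j)"] show "gpath (fst j) (ori (fst j)) (snd j) ! 0 \<notin> W4 \<and>
      (s3 (gpath (fst j) (ori (fst j)) (snd j) ! 0) \<noteq> path_a (fst j) (ori (fst j)) (snd j) \<or>
       t4 (gpath (fst j) (ori (fst j)) (snd j) ! 6) \<noteq> path_b (fst j) (ori (fst j)) (snd j))"
      using h e unfolding W4_def by auto
  qed
qed

end



context gc begin

abbreviation "VS \<equiv> Gp_V V E"
abbreviation "ADJ \<equiv> Gp_adj E ori"
abbreviation "LL \<equiv> Gp_L Lint"

lemma ABCD_V: "Av \<in> VS" "Bv \<in> VS" "Cv \<in> VS" "Dv \<in> VS" unfolding Gp_V_def by auto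

lemma CD_vals: "is_Lcol VS ADJ LL g \<Longrightarrow> g Cv \<in> {3,4} \<and> g Dv = 4"
  using ABCD_V unfolding is_Lcol_def by force

lemma colAB:
  assumes cg: "is_Lcol VS ADJ LL g" and a: "a' \<in> {1,2,3}" and b: "b' \<in> {1,2}" and ab: "a' \<noteq> b'"
    and aCD: "a' \<noteq> g Cv" "a' \<noteq> g Dv" and bCD: "b' \<noteq> g Cv" "b' \<noteq> g Dv"
  shows "is_Lcol VS ADJ LL (g(Av := a', Bv := b'))"
  unfolding is_Lcol_def
proof (intro conjI ballI impI)
  fix v assume "v \<in> VS" then show "(g(Av := a', Bv := b')) v \<in> LL v" using cg a b unfolding is_Lcol_def by auto
next
  fix u v assume uv: "u \<in> VS" "v \<in> VS" "ADJ u v"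
  show "(g(Av := a', Bv := b')) u \<noteq> (g(Av := a', Bv := b')) v"
  proof (cases "u \<in> {Av,Bv} \<or> v \<in> {Av,Bv}")
    case True
    from adj_AB[OF uv(3) True] show ?thesis using ab aCD bCD by auto
  next
    case False then show ?thesis using cg uv unfolding is_Lcol_def by auto
  qed
qed

definition "ov g = g(Av := 2, Bv := 1)"

lemma ov_col: "is_Lcol VS ADJ LL g \<Longrightarrow> is_Lcol VS ADJ LL (ov g)"
proof -
  assume cg: "is_Lcol VS ADJ LL g"
  have "g Cv \<in> {3,4} \<and> g Dv = 4" using CD_vals[OF cg] .
  then show ?thesis unfolding ov_def by (intro colAB[OF cg]) auto
qed

lemma ov_one: "onechg VS q r \<Longrightarrow> onechg VS (ov q) (ov r)"
  unfolding onechg_def ov_def by auto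

lemma ov_eq: "eqon VS q r \<Longrightarrow> eqon VS (ov q) (ov r)"
  unfolding eqon_def ov_def by auto

lemma NI_AD: "NI Av" "NI Bv" "NI Cv" "NI Dv" using NI_notPv by auto

lemma cardW: "card W1 \<le> 2 * card E" "card W2 \<le> 2 * card E" "card W3 \<le> card E" "card W4 = 1"
proof -
  have "card W1 \<le> card (\<Union>E)" unfolding W1_def by (rule card_image_le) (use finE eori og in \<open>auto simp: oriented_graph_def intro: finite_subset\<close>)
  also have "\<dots> \<le> sum card E" by (rule card_Union_le_sum_card)
  also have "\<dots> = sum (\<lambda>_. 2) E" using og unfolding oriented_graph_def by (intro sum.cong) auto
  also have "\<dots> = 2 * card E" by simp
  finally show "card W1 \<le> 2 * card E" .
  have "card W2 \<le> card (Xv ` E) + card (Yv ` E)" unfolding W2_def by (rule card_Un_le)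
  also have "\<dots> \<le> card E + card E" using card_image_le[OF finE] by (intro add_mono) auto
  finally show "card W2 \<le> 2 * card E" by simp
  show "card W3 \<le> card E" unfolding W3_def using card_image_le[OF finE] by auto
  show "card W4 = 1" unfolding W4_def by simp
qed

lemma gc_main: "\<exists>\<sigma> n. recol_seq VS ADJ LL \<sigma> n \<and> (\<forall>w\<in>VS. \<sigma> 0 w = Gp_alpha aint w) \<and>
    (\<forall>w\<in>VS. \<sigma> n w = Gp_beta aint w) \<and> n \<le> 330 * (card E + 1)"
proof -
  let ?cI = "card (E \<times> {0..<8::nat})"
  have cI: "?cI = 8 * card E" by (simp add: card_cartesian_product)
  have c0: "is_Lcol VS ADJ LL (Gp_alpha aint)" using vc unfolding valid_construction_def by blast
  obtain d1 where r1: "reach VS ADJ LL (5 * ?cI + card W1) (Gp_alpha aint) d1" and n1: "\<forall>z. NI z \<longrightarrow> d1 z = s1 z"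
    using phase1[OF c0] unfolding s0_def by blast
  obtain d2 where r2: "reach VS ADJ LL (5 * ?cI + card W2) d1 d2" and n2: "\<forall>z. NI z \<longrightarrow> d2 z = s2 z"
    using phase2[OF conjunct2[OF reach_col[OF r1]] n1] by blast
  obtain d3 where r3: "reach VS ADJ LL (5 * ?cI + card W3) d2 d3" and n3: "\<forall>z. NI z \<longrightarrow> d3 z = s3 z"
    using phase3[OF conjunct2[OF reach_col[OF r2]] n2] by blast
  obtain d4 where r4: "reach VS ADJ LL (5 * ?cI + card W4) d3 d4" and n4: "\<forall>z. NI z \<longrightarrow> d4 z = s4 z"
    using phase4[OF conjunct2[OF reach_col[OF r3]] n3] by blast
  define K where "K = (5 * ?cI + card W1) + (5 * ?cI + card W2) + (5 * ?cI + card W3) + (5 * ?cI + card W4)"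
  have rK: "reach VS ADJ LL K (Gp_alpha aint) d4"
    unfolding K_def using reach_trans[OF reach_trans[OF reach_trans[OF r1 r2] r3] r4] by (simp add: add.assoc)
  have cd4: "is_Lcol VS ADJ LL d4" using reach_col[OF rK] by simp
  have v4: "d4 Av = 1" "d4 Bv = 2" "d4 Cv = 4" "d4 Dv = 4"
    using n4 NI_AD unfolding s4_def s3_def s2_def s1_def s0_def W4_def t4_def W3_def W2_def W1_def by auto
  define g1 where "g1 = d4(Av := 3, Bv := 2)"
  define g2 where "g2 = d4(Av := 3, Bv := 1)"
  have cg1: "is_Lcol VS ADJ LL g1" unfolding g1_def by (rule colAB[OF cd4]) (use v4 in auto)
  have cg2: "is_Lcol VS ADJ LL g2" unfolding g2_def by (rule colAB[OF cd4]) (use v4 in auto)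
  have cg3: "is_Lcol VS ADJ LL (ov d4)" by (rule ov_col[OF cd4])
  have o1: "onechg VS d4 g1" unfolding onechg_def g1_def using v4 by auto
  have o2: "onechg VS g1 g2" unfolding onechg_def g1_def g2_def by auto
  have o3: "onechg VS g2 (ov d4)" unfolding onechg_def g2_def ov_def by auto
  have rm: "reach VS ADJ LL (1 + 1 + 1) d4 (ov d4)"
    using reach_trans[OF reach_trans[OF reach1[OF cd4 cg1 o1] reach1[OF cg1 cg2 o2]] reach1[OF cg2 cg3 o3]] .
  have rb: "reach VS ADJ LL K (ov d4) (ov (Gp_alpha aint))"
    using reach_map[OF reach_sym[OF rK], of ov] ov_col ov_one ov_eq by blast
  have rall: "reach VS ADJ LL (K + (1 + 1 + 1) + K) (Gp_alpha aint) (ov (Gp_alpha aint))"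
    using reach_trans[OF reach_trans[OF rK rm] rb] .
  have "K \<le> 165 * card E + 1" unfolding K_def cI using cardW by simp
  then have bnd: "K + (1 + 1 + 1) + K \<le> 330 * (card E + 1)" by simp
  have ob: "ov (Gp_alpha aint) = Gp_beta aint" unfolding ov_def Gp_beta_def ..
  obtain \<sigma> n where s: "recol_seq VS ADJ LL \<sigma> n" "n \<le> K + (1 + 1 + 1) + K"
    "eqon VS (\<sigma> 0) (Gp_alpha aint)" "eqon VS (\<sigma> n) (ov (Gp_alpha aint))"
    using rall unfolding reach_def by blast
  show ?thesis
    apply (rule exI[of _ \<sigma>], rule exI[of _ n])
    using s bnd ob unfolding eqon_def by auto
qed

end

theorem mainTheorem7:
  shows "\<exists>c::nat. \<forall>V E ori Lint aint.
     oriented_graph V E ori \<and> valid_construction V E ori Lint aint \<and> three_colorable V E \<longrightarrow>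
     (\<exists>\<sigma> n. recol_seq (Gp_V V E) (Gp_adj E ori) (Gp_L Lint) \<sigma> n \<and>
        (\<forall>w\<in>Gp_V V E. \<sigma> 0 w = Gp_alpha aint w) \<and>
        (\<forall>w\<in>Gp_V V E. \<sigma> n w = Gp_beta aint w) \<and>
        n \<le> c * (card E + 1))"
proof (rule exI[of _ 330], intro allI impI)
  fix V E ori Lint aint
  assume a: "oriented_graph V E ori \<and> valid_construction V E ori Lint aint \<and> three_colorable V E"
  then obtain f :: "nat \<Rightarrow> nat" where f: "\<forall>v\<in>V. f v \<in> {1,2,3}" "\<forall>e\<in>E. \<forall>u\<in>e. \<forall>v\<in>e. u \<noteq> v \<longrightarrow> f u \<noteq> f v"
    unfolding three_colorable_def by blast
  interpret gc V E ori Lint aint f using a f by unfold_locales auto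
  show "\<exists>\<sigma> n. recol_seq (Gp_V V E) (Gp_adj E ori) (Gp_L Lint) \<sigma> n \<and>
        (\<forall>w\<in>Gp_V V E. \<sigma> 0 w = Gp_alpha aint w) \<and>
        (\<forall>w\<in>Gp_V V E. \<sigma> n w = Gp_beta aint w) \<and>
        n \<le> 330 * (card E + 1)" by (rule gc_main)
qed


end
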